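(* Let $\varepsilon>0$, $F\in C^1(\mathbb{R})$ and $a\in C(]0,1[\times[0,\infty)\times\mathbb{R}^4)$, and consider for $t_0\ge0$ the problem $$-\varepsilon u_{xxt}+u_{tt}-u_{xx}=F(u)-a(x,t,u,u_x,u_{xx},u_t)\,u_t,\quad x\in(0,1),\ t>t_0,\qquad u(0,t)=u(1,t)=0,$$ with $u(x,t_0)=u_0(x)$, $u_t(x,t_0)=u_1(x)$, $u_0(0)=u_0(1)=u_1(0)=u_1(1)=0$. Assume: $F(0)=0$ and there is a constant $K>0$ with $F'(s)\le K<3\pi^2/4$ for all $s$; $\nu:=\varepsilon\pi^2+\inf a>0$; and there exist $\tau\in[0,2[$ and constants $A>0$, $A'\ge0$ such that $a(x,t,\varphi,\varphi_x,\varphi_{xx},\psi)\le A\,[d(\varphi,\psi)]^{\tau}+A'$ for all $x,t$ and $(\varphi,\psi)\in\Gamma$. Then the null solution is exponential-asymptotically stable in the large.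
   Context: $\Gamma:=\{(\varphi,\psi):\varphi\in C^2([0,1]),\ \psi\in C([0,1]),\ \varphi(0)=\varphi(1)=\psi(0)=\psi(1)=0\}$, $d^2(\varphi,\psi):=\int_0^1(\varphi^2+\varphi_x^2+\varphi_{xx}^2+\psi^2)dx$. The null solution is exponential-asymptotically stable in the large if for every $\alpha>0$ there are constants $D(\alpha),C(\alpha)>0$ such that, for every $t_0\ge0$ and initial data with $d(u_0,u_1)\le\alpha$, the solution satisfies $d(u(\cdot,t),u_t(\cdot,t))\le D(\alpha)e^{-C(\alpha)(t-t_0)}d(u_0,u_1)$ for all $t\ge t_0$. *)

theory Defs
  imports "HOL-Analysis.Analysis"
begin

text \<open>The metric d on Gamma. A C^2 function phi on [0,1] is represented together
  with its first and second derivatives phix, phixx (on [0,1]).\<close>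
definition dG :: "(real \<Rightarrow> real) \<Rightarrow> (real \<Rightarrow> real) \<Rightarrow> (real \<Rightarrow> real) \<Rightarrow> (real \<Rightarrow> real) \<Rightarrow> real" where
  "dG phi phix phixx psi =
     sqrt (integral {0..1} (\<lambda>x. (phi x)\<^sup>2 + (phix x)\<^sup>2 + (phixx x)\<^sup>2 + (psi x)\<^sup>2))"

definition in_Gamma :: "(real \<Rightarrow> real) \<Rightarrow> (real \<Rightarrow> real) \<Rightarrow> (real \<Rightarrow> real) \<Rightarrow> (real \<Rightarrow> real) \<Rightarrow> bool" where
  "in_Gamma phi phix phixx psi \<longleftrightarrow>
     (\<forall>x\<in>{0..1}. (phi has_real_derivative phix x) (at x within {0..1})
                \<and> (phix has_real_derivative phixx x) (at x within {0..1}))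
   \<and> continuous_on {0..1} phixx \<and> continuous_on {0..1} psi
   \<and> phi 0 = 0 \<and> phi 1 = 0 \<and> psi 0 = 0 \<and> psi 1 = 0"

text \<open>Real power with the convention 0^0 = 1 (Isabelle's powr has 0 powr 0 = 0).\<close>
definition rpow :: "real \<Rightarrow> real \<Rightarrow> real" where
  "rpow d tau = (if tau = 0 then 1 else d powr tau)"

definition is_solution ::
  "real \<Rightarrow> (real \<Rightarrow> real) \<Rightarrow> (real \<Rightarrow> real \<Rightarrow> real \<Rightarrow> real \<Rightarrow> real \<Rightarrow> real \<Rightarrow> real) \<Rightarrow> real
   \<Rightarrow> (real \<Rightarrow> real \<Rightarrow> real) \<Rightarrow> (real \<Rightarrow> real \<Rightarrow> real) \<Rightarrow> (real \<Rightarrow> real \<Rightarrow> real) \<Rightarrow> (real \<Rightarrow> real \<Rightarrow> real) \<Rightarrow> bool" where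
  "is_solution eps F a t0 u ux uxx ut \<longleftrightarrow>
     (\<exists>utt uxxt :: real \<Rightarrow> real \<Rightarrow> real.
        (\<forall>f \<in> {u, ux, uxx, ut, utt, uxxt}. continuous_on ({0..1} \<times> {t0..}) (\<lambda>(x, t). f x t))
      \<and> (\<forall>x\<in>{0..1}. \<forall>t\<in>{t0..}.
            ((\<lambda>y. u y t) has_real_derivative ux x t) (at x within {0..1})
          \<and> ((\<lambda>y. ux y t) has_real_derivative uxx x t) (at x within {0..1})
          \<and> ((\<lambda>s. u x s) has_real_derivative ut x t) (at t within {t0..})
          \<and> ((\<lambda>s. ut x s) has_real_derivative utt x t) (at t within {t0..})
          \<and> ((\<lambda>s. uxx x s) has_real_derivative uxxt x t) (at t within {t0..}))
      \<and> (\<forall>t\<in>{t0..}. u 0 t = 0 \<and> u 1 t = 0)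
      \<and> (\<forall>x\<in>{0<..<1}. \<forall>t\<in>{t0<..}.
            - eps * uxxt x t + utt x t - uxx x t
              = F (u x t) - a x t (u x t) (ux x t) (uxx x t) (ut x t) * ut x t))"

definition exp_stable_large ::
  "real \<Rightarrow> (real \<Rightarrow> real) \<Rightarrow> (real \<Rightarrow> real \<Rightarrow> real \<Rightarrow> real \<Rightarrow> real \<Rightarrow> real \<Rightarrow> real) \<Rightarrow> bool" where
  "exp_stable_large eps F a \<longleftrightarrow>
     (\<forall>\<alpha>>0. \<exists>D C. D > 0 \<and> C > 0 \<and>
        (\<forall>t0\<ge>0. \<forall>u ux uxx ut.
           is_solution eps F a t0 u ux uxx ut
           \<and> dG (\<lambda>x. u x t0) (\<lambda>x. ux x t0) (\<lambda>x. uxx x t0) (\<lambda>x. ut x t0) \<le> \<alpha>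
           \<longrightarrow> (\<forall>t\<ge>t0. dG (\<lambda>x. u x t) (\<lambda>x. ux x t) (\<lambda>x. uxx x t) (\<lambda>x. ut x t)
                  \<le> D * exp (- C * (t - t0))
                       * dG (\<lambda>x. u x t0) (\<lambda>x. ux x t0) (\<lambda>x. uxx x t0) (\<lambda>x. ut x t0))))"

end

theory Submission
  imports Defs
begin

lemma cs_int:
  fixes f g :: "real \<Rightarrow> real"
  assumes f: "continuous_on {0..1} f" and g: "continuous_on {0..1} g"
  shows "(integral {0..1} (\<lambda>x. f x * g x))\<^sup>2 \<le> integral {0..1} (\<lambda>x. (f x)\<^sup>2) * integral {0..1} (\<lambda>x. (g x)\<^sup>2)"
proof -
  define pA where "pA = integral {0..1} (\<lambda>x. (f x)\<^sup>2)"
  define pB where "pB = integral {0..1} (\<lambda>x. f x * g x)"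
  define pC where "pC = integral {0..1} (\<lambda>x. (g x)\<^sup>2)"
  have key: "0 \<le> pA - 2 * w * pB + w\<^sup>2 * pC" for w
  proof -
    have "0 \<le> integral {0..1} (\<lambda>x. (f x - w * g x)\<^sup>2)"
      by (rule integral_nonneg) (auto intro!: integrable_continuous_interval continuous_intros f g)
    also have "integral {0..1} (\<lambda>x. (f x - w * g x)\<^sup>2) =
       integral {0..1} (\<lambda>x. (f x)\<^sup>2 - (2*w) * (f x * g x) + w\<^sup>2 * (g x)\<^sup>2)"
      by (simp add: power2_eq_square algebra_simps)
    also have "\<dots> = pA - 2 * w * pB + w\<^sup>2 * pC"
      unfolding pA_def pB_def pC_def
      by (subst integral_add integral_diff integral_mult_right,
          auto intro!: integrable_continuous_interval continuous_intros f g)+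
    finally show ?thesis .
  qed
  have C0: "pC \<ge> 0" unfolding pC_def by (rule integral_nonneg) (auto intro!: integrable_continuous_interval continuous_intros g)
  show ?thesis
  proof (cases "pC = 0")
    case True
    have "pB = 0"
    proof (rule ccontr)
      assume "pB \<noteq> 0"
      have "0 \<le> pA - 2*((pA+1)/(2*pB))*pB" using key[of "(pA+1)/(2*pB)"] True by simp
      with \<open>pB \<noteq> 0\<close> show False by (simp add: field_simps)
    qed
    then show ?thesis using True unfolding pA_def pB_def pC_def by simp
  next
    case False
    with C0 have "pC > 0" by simp
    have "0 \<le> pA - 2*(pB/pC)*pB + (pB/pC)\<^sup>2 * pC" by (rule key)
    also have "\<dots> = pA - pB\<^sup>2 / pC" using \<open>pC > 0\<close> by (simp add: field_simps power2_eq_square)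
    finally have "pB\<^sup>2 / pC \<le> pA" by simp
    then show ?thesis using \<open>pC > 0\<close> unfolding pA_def pB_def pC_def by (simp add: field_simps mult.commute)
  qed
qed

lemma deriv_cont_on:
  fixes f f' :: "real \<Rightarrow> real"
  assumes "\<forall>x\<in>{0..1}. (f has_real_derivative f' x) (at x within {0..1})"
  shows "continuous_on {0..1} f"
  using assms by (meson DERIV_continuous continuous_at_imp_continuous_on continuous_on_eq_continuous_within)

lemma wirt_aux:
  fixes f f' :: "real \<Rightarrow> real" and eta :: real
  assumes d: "\<forall>x\<in>{0..1}. (f has_real_derivative f' x) (at x within {0..1})"
   and c: "continuous_on {0..1} f'" and f0: "f 0 = 0" and f1: "f 1 = 0" and eta: "eta > 0"
  shows "(pi / (1 + 2*eta))\<^sup>2 * integral {0..1} (\<lambda>x. (f x)\<^sup>2) \<le> integral {0..1} (\<lambda>x. (f' x)\<^sup>2)"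
proof -
  define l where "l = pi / (1 + 2*eta)"
  have l0: "l > 0" unfolding l_def using eta by simp
  define th where "th x = l * (x + eta)" for x
  have thpos: "0 < th x" "th x < pi" if "x \<in> {0..1}" for x
  proof -
    show "0 < th x" using that l0 eta unfolding th_def by auto
    have "th x \<le> l * (1 + eta)" using that l0 unfolding th_def by (auto intro!: mult_left_mono)
    also have "\<dots> < pi" unfolding l_def using eta by (simp add: field_simps)
    finally show "th x < pi" .
  qed
  have sinpos: "sin (th x) > 0" if "x \<in> {0..1}" for x using thpos[OF that] by (simp add: sin_gt_zero)
  define cc where "cc x = l * cos (th x) / sin (th x)" for x
  have fc: "continuous_on {0..1} f" using d by (rule deriv_cont_on)
  have thc: "continuous_on {0..1} th" unfolding th_def by (intro continuous_intros)
  have ccc: "continuous_on {0..1} cc" unfolding cc_def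
    using sinpos by (auto intro!: continuous_intros thc continuous_on_compose2[OF continuous_on_sin thc]
        continuous_on_compose2[OF continuous_on_cos thc] dest: less_imp_neq[symmetric])
      (metis atLeastAtMost_iff less_irrefl)
  have ccd: "(cc has_real_derivative - (l\<^sup>2) / (sin (th x))\<^sup>2) (at x within {0..1})"
    if x: "x \<in> {0..1}" for x
  proof -
    have "(cc has_real_derivative (l * (- sin (th x) * l) * sin (th x) - l * cos (th x) * (cos (th x) * l)) / (sin (th x) * sin (th x))) (at x)"
    proof -
      have sc: "cos (th x) * cos (th x) + sin (th x) * sin (th x) = 1"
        by (metis power2_eq_square sin_cos_squared_add add.commute)
      have e: "l * l = l * (l * (cos (th x) * cos (th x))) + l * (l * (sin (th x) * sin (th x)))"
        using sc by (metis distrib_left mult.right_neutral mult.assoc)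
      show ?thesis unfolding cc_def th_def using sinpos[OF x]
        by (auto intro!: derivative_eq_intros simp: th_def)
    qed
    also have "(l * (- sin (th x) * l) * sin (th x) - l * cos (th x) * (cos (th x) * l)) / (sin (th x) * sin (th x))
        = - (l\<^sup>2) / (sin (th x))\<^sup>2"
    proof -
      have "l * (- sin (th x) * l) * sin (th x) - l * cos (th x) * (cos (th x) * l) = - (l\<^sup>2) * ((sin (th x))\<^sup>2 + (cos (th x))\<^sup>2)"
        unfolding power2_eq_square by algebra
      also have "\<dots> = - (l\<^sup>2)" by simp
      finally have "l * (- sin (th x) * l) * sin (th x) - l * cos (th x) * (cos (th x) * l) = - (l\<^sup>2)" .
      then show ?thesis by (simp add: power2_eq_square)
    qed
    finally show ?thesis by (rule has_field_derivative_at_within)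
  qed
  define Phi where "Phi x = cc x * (f x)\<^sup>2" for x
  define g where "g x = - (l\<^sup>2) / (sin (th x))\<^sup>2 * (f x)\<^sup>2 + cc x * (2 * f x * f' x)" for x
  have Phid: "(Phi has_real_derivative g x) (at x within {0..1})" if x: "x \<in> {0..1}" for x
    unfolding Phi_def g_def using ccd[OF x] d x
    by (auto intro!: derivative_eq_intros simp: power2_eq_square)
  have "(g has_integral Phi 1 - Phi 0) {0..1}"
    by (rule fundamental_theorem_of_calculus) (auto simp: has_real_derivative_iff_has_vector_derivative[symmetric] intro!: Phid)
  then have gi: "(g has_integral 0) {0..1}" unfolding Phi_def using f0 f1 by simp
  have pw: "(f' x)\<^sup>2 - l\<^sup>2 * (f x)\<^sup>2 = (f' x - cc x * f x)\<^sup>2 + g x" if x: "x \<in> {0..1}" for x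
  proof -
    have s: "sin (th x) \<noteq> 0" using sinpos[OF x] by simp
    have "cc x ^ 2 - l\<^sup>2 / (sin (th x))\<^sup>2 = - (l\<^sup>2)"
    proof -
      have "cc x ^ 2 - l\<^sup>2 / (sin (th x))\<^sup>2 = l\<^sup>2 * ((cos (th x))\<^sup>2 - 1) / (sin (th x))\<^sup>2"
        unfolding cc_def using s by (simp add: field_simps power2_eq_square)
      also have "(cos (th x))\<^sup>2 - 1 = - (sin (th x))\<^sup>2" by (simp add: cos_squared_eq)
      finally show ?thesis using s by simp
    qed
    moreover have "(f' x - cc x * f x)\<^sup>2 + g x = (f' x)\<^sup>2 + (cc x ^ 2 - l\<^sup>2 / (sin (th x))\<^sup>2) * (f x)\<^sup>2"
      unfolding g_def by (simp add: power2_eq_square algebra_simps diff_divide_distrib add_divide_distrib)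
    ultimately show ?thesis by simp
  qed
  have gint: "g integrable_on {0..1}" using gi by blast
  have i2: "(\<lambda>x. (f' x - cc x * f x)\<^sup>2) integrable_on {0..1}"
    by (auto intro!: integrable_continuous_interval continuous_intros c fc ccc)
  have "integral {0..1} (\<lambda>x. (f' x)\<^sup>2 - l\<^sup>2 * (f x)\<^sup>2) = integral {0..1} (\<lambda>x. (f' x - cc x * f x)\<^sup>2 + g x)"
    by (rule integral_cong) (use pw in auto)
  also have "\<dots> = integral {0..1} (\<lambda>x. (f' x - cc x * f x)\<^sup>2) + integral {0..1} g"
    by (rule integral_add[OF i2 gint])
  also have "\<dots> \<ge> 0" using gi integral_unique[OF gi]
    by (simp add: integral_nonneg i2)
  finally have "0 \<le> integral {0..1} (\<lambda>x. (f' x)\<^sup>2 - l\<^sup>2 * (f x)\<^sup>2)" .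
  also have "\<dots> = integral {0..1} (\<lambda>x. (f' x)\<^sup>2) - l\<^sup>2 * integral {0..1} (\<lambda>x. (f x)\<^sup>2)"
    by (subst integral_diff) (auto intro!: integrable_continuous_interval continuous_intros c fc)
  finally show ?thesis unfolding l_def by simp
qed

lemma wirtinger:
  fixes f f' :: "real \<Rightarrow> real"
  assumes d: "\<forall>x\<in>{0..1}. (f has_real_derivative f' x) (at x within {0..1})"
   and c: "continuous_on {0..1} f'" and f0: "f 0 = 0" and f1: "f 1 = 0"
  shows "pi\<^sup>2 * integral {0..1} (\<lambda>x. (f x)\<^sup>2) \<le> integral {0..1} (\<lambda>x. (f' x)\<^sup>2)"
proof -
  have lim: "((\<lambda>eta. (pi / (1 + 2*eta))\<^sup>2 * integral {0..1} (\<lambda>x. (f x)\<^sup>2)) \<longlongrightarrow> (pi / (1 + 2*0))\<^sup>2 * integral {0..1} (\<lambda>x. (f x)\<^sup>2)) (at_right 0)"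
    by (intro tendsto_intros) auto
  have ev: "\<forall>\<^sub>F eta in at_right 0. (pi / (1 + 2*eta))\<^sup>2 * integral {0..1} (\<lambda>x. (f x)\<^sup>2) \<le> integral {0..1} (\<lambda>x. (f' x)\<^sup>2)"
    using eventually_at_right_less[of 0] by eventually_elim (rule wirt_aux[OF d c f0 f1], simp)
  have "(pi / (1 + 2*0))\<^sup>2 * integral {0..1} (\<lambda>x. (f x)\<^sup>2) \<le> integral {0..1} (\<lambda>x. (f' x)\<^sup>2)"
    by (rule tendsto_upperbound[OF lim ev]) simp
  then show ?thesis by simp
qed

lemma cs_int_ab:
  fixes f g :: "real \<Rightarrow> real"
  assumes f: "continuous_on {a..b} f" and g: "continuous_on {a..b} g"
  shows "(integral {a..b} (\<lambda>x. f x * g x))\<^sup>2 \<le> integral {a..b} (\<lambda>x. (f x)\<^sup>2) * integral {a..b} (\<lambda>x. (g x)\<^sup>2)"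
proof -
  define pA where "pA = integral {a..b} (\<lambda>x. (f x)\<^sup>2)"
  define pB where "pB = integral {a..b} (\<lambda>x. f x * g x)"
  define pC where "pC = integral {a..b} (\<lambda>x. (g x)\<^sup>2)"
  have key: "0 \<le> pA - 2 * w * pB + w\<^sup>2 * pC" for w
  proof -
    have "0 \<le> integral {a..b} (\<lambda>x. (f x - w * g x)\<^sup>2)"
      by (rule integral_nonneg) (auto intro!: integrable_continuous_interval continuous_intros f g)
    also have "integral {a..b} (\<lambda>x. (f x - w * g x)\<^sup>2) =
       integral {a..b} (\<lambda>x. (f x)\<^sup>2 - (2 * w) * (f x * g x) + w\<^sup>2 * (g x)\<^sup>2)"
      by (simp add: power2_eq_square algebra_simps)
    also have "\<dots> = pA - 2 * w * pB + w\<^sup>2 * pC"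
      unfolding pA_def pB_def pC_def
      by (subst integral_add integral_diff integral_mult_right,
          auto intro!: integrable_continuous_interval continuous_intros f g)+
    finally show ?thesis .
  qed
  have C0: "pC \<ge> 0" unfolding pC_def by (rule integral_nonneg) (auto intro!: integrable_continuous_interval continuous_intros g)
  show ?thesis
  proof (cases "pC = 0")
    case True
    have "pB = 0"
    proof (rule ccontr)
      assume "pB \<noteq> 0"
      have "0 \<le> pA - 2 * ((pA+1)/(2 * pB)) * pB" using key[of "(pA+1)/(2 * pB)"] True by simp
      with \<open>pB \<noteq> 0\<close> show False by (simp add: field_simps)
    qed
    then show ?thesis using True unfolding pA_def pB_def pC_def by simp
  next
    case False
    with C0 have "pC > 0" by simp
    have "0 \<le> pA - 2 * (pB/pC) * pB + (pB/pC)\<^sup>2 * pC" by (rule key)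
    also have "\<dots> = pA - pB\<^sup>2 / pC" using \<open>pC > 0\<close> by (simp add: field_simps power2_eq_square)
    finally have "pB\<^sup>2 / pC \<le> pA" by simp
    then show ?thesis using \<open>pC > 0\<close> unfolding pA_def pB_def pC_def by (simp add: field_simps mult.commute)
  qed
qed

lemma cs_sqrt:
  fixes f g :: "real \<Rightarrow> real"
  assumes f: "continuous_on {0..1} f" and g: "continuous_on {0..1} g"
  shows "\<bar>integral {0..1} (\<lambda>x. f x * g x)\<bar> \<le> sqrt (integral {0..1} (\<lambda>x. (f x)\<^sup>2)) * sqrt (integral {0..1} (\<lambda>x. (g x)\<^sup>2))"
proof -
  have "\<bar>integral {0..1} (\<lambda>x. f x * g x)\<bar> = sqrt ((integral {0..1} (\<lambda>x. f x * g x))\<^sup>2)" by simp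
  also have "\<dots> \<le> sqrt (integral {0..1} (\<lambda>x. (f x)\<^sup>2) * integral {0..1} (\<lambda>x. (g x)\<^sup>2))"
    by (rule real_sqrt_le_mono[OF cs_int[OF f g]])
  also have "\<dots> = sqrt (integral {0..1} (\<lambda>x. (f x)\<^sup>2)) * sqrt (integral {0..1} (\<lambda>x. (g x)\<^sup>2))"
    by (rule real_sqrt_mult)
  finally show ?thesis .
qed

lemma ibp01:
  fixes f f' g g' :: "real \<Rightarrow> real"
  assumes df: "\<forall>x\<in>{0..1}. (f has_real_derivative f' x) (at x within {0..1})"
    and dg: "\<forall>x\<in>{0..1}. (g has_real_derivative g' x) (at x within {0..1})"
    and cf: "continuous_on {0..1} f'" and cg: "continuous_on {0..1} g'"
  shows "integral {0..1} (\<lambda>x. f x * g' x) = f 1 * g 1 - f 0 * g 0 - integral {0..1} (\<lambda>x. f' x * g x)"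
proof -
  have fc: "continuous_on {0..1} f" using df by (rule deriv_cont_on)
  have gc: "continuous_on {0..1} g" using dg by (rule deriv_cont_on)
  have "((\<lambda>x. f x * g x) has_real_derivative f' x * g x + f x * g' x) (at x within {0..1})" if "x \<in> {0..1}" for x
    using df dg that by (auto intro!: derivative_eq_intros)
  then have "((\<lambda>x. f' x * g x + f x * g' x) has_integral f 1 * g 1 - f 0 * g 0) {0..1}"
    using fundamental_theorem_of_calculus[of 0 1 "\<lambda>x. f x * g x" "\<lambda>x. f' x * g x + f x * g' x"]
    by (auto simp: has_real_derivative_iff_has_vector_derivative[symmetric])
  then have "integral {0..1} (\<lambda>x. f' x * g x + f x * g' x) = f 1 * g 1 - f 0 * g 0" by (rule integral_unique)
  moreover have "integral {0..1} (\<lambda>x. f' x * g x + f x * g' x) = integral {0..1} (\<lambda>x. f' x * g x) + integral {0..1} (\<lambda>x. f x * g' x)"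
    by (rule integral_add) (auto intro!: integrable_continuous_interval continuous_intros fc gc cf cg)
  ultimately show ?thesis by simp
qed

lemma sup_bound:
  fixes f f' :: "real \<Rightarrow> real"
  assumes df: "\<forall>x\<in>{0..1}. (f has_real_derivative f' x) (at x within {0..1})"
    and cf: "continuous_on {0..1} f'" and f0: "f 0 = 0" and x: "x \<in> {0..1}"
  shows "(f x)\<^sup>2 \<le> integral {0..1} (\<lambda>y. (f' y)\<^sup>2)"
proof -
  have sub: "{0..x} \<subseteq> {0..1}" using x by auto
  have "(f' has_integral f x - f 0) {0..x}"
    using x df by (intro fundamental_theorem_of_calculus)
      (auto simp: has_real_derivative_iff_has_vector_derivative[symmetric] intro!: DERIV_subset[OF bspec[OF df]])
  then have fx: "f x = integral {0..x} (\<lambda>y. f' y * 1)" using f0 by (simp add: integral_unique)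
  have cfx: "continuous_on {0..x} f'" using cf sub by (rule continuous_on_subset)
  have "(f x)\<^sup>2 \<le> integral {0..x} (\<lambda>y. (f' y)\<^sup>2) * integral {0..x} (\<lambda>y. 1\<^sup>2)"
    unfolding fx by (rule cs_int_ab[OF cfx]) (rule continuous_on_const)
  also have "\<dots> = integral {0..x} (\<lambda>y. (f' y)\<^sup>2) * x" using x by simp
  also have "\<dots> \<le> integral {0..x} (\<lambda>y. (f' y)\<^sup>2)"
  proof -
    have "0 \<le> integral {0..x} (\<lambda>y. (f' y)\<^sup>2)" by (rule integral_nonneg) (auto intro!: integrable_continuous_interval continuous_intros cfx)
    then show ?thesis using x by (simp add: mult_left_le)
  qed
  also have "\<dots> \<le> integral {0..1} (\<lambda>y. (f' y)\<^sup>2)"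
    by (rule integral_subset_le[OF sub]) (auto intro!: integrable_continuous_interval continuous_intros cfx cf)
  finally show ?thesis .
qed

definition Pint :: "(real \<Rightarrow> real) \<Rightarrow> real \<Rightarrow> real" where
  "Pint h x = integral {0..x} (\<lambda>y. y * h y)"
definition Qint :: "(real \<Rightarrow> real) \<Rightarrow> real \<Rightarrow> real" where
  "Qint h x = integral {0..x} (\<lambda>y. (1 - y) * h y)"
definition Sop :: "(real \<Rightarrow> real) \<Rightarrow> real \<Rightarrow> real" where
  "Sop h x = - (1 - x) * Pint h x - x * (Qint h 1 - Qint h x)"
definition Sd :: "(real \<Rightarrow> real) \<Rightarrow> real \<Rightarrow> real" where
  "Sd h x = Pint h x - (Qint h 1 - Qint h x)"

lemma Sop_props:
  assumes h: "continuous_on {0..1} h"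
  shows "\<forall>x\<in>{0..1}. (Sop h has_real_derivative Sd h x) (at x within {0..1})"
    and "\<forall>x\<in>{0..1}. (Sd h has_real_derivative h x) (at x within {0..1})"
    and "continuous_on {0..1} (Sd h)"
    and "Sop h 0 = 0" and "Sop h 1 = 0"
proof -
  have Pd: "(Pint h has_real_derivative x * h x) (at x within {0..1})" if "x \<in> {0..1}" for x
    unfolding Pint_def by (rule integral_has_real_derivative[OF _ that]) (auto intro!: continuous_intros h)
  have Qd: "(Qint h has_real_derivative (1 - x) * h x) (at x within {0..1})" if "x \<in> {0..1}" for x
    unfolding Qint_def by (rule integral_has_real_derivative[OF _ that]) (auto intro!: continuous_intros h)
  show "\<forall>x\<in>{0..1}. (Sop h has_real_derivative Sd h x) (at x within {0..1})"
  proof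
    fix x :: real assume x: "x \<in> {0..1}"
    show "(Sop h has_real_derivative Sd h x) (at x within {0..1})"
      unfolding Sop_def[abs_def] Sd_def
      by (rule derivative_eq_intros Pd[OF x] Qd[OF x] | simp)+ (simp add: algebra_simps)
  qed
  show "\<forall>x\<in>{0..1}. (Sd h has_real_derivative h x) (at x within {0..1})"
  proof
    fix x :: real assume x: "x \<in> {0..1}"
    show "(Sd h has_real_derivative h x) (at x within {0..1})"
      unfolding Sd_def[abs_def]
      by (rule derivative_eq_intros Pd[OF x] Qd[OF x] | simp)+ (simp add: algebra_simps)
  qed
  then show "continuous_on {0..1} (Sd h)" by (rule deriv_cont_on)
  show "Sop h 0 = 0" "Sop h 1 = 0" unfolding Sop_def Pint_def Qint_def by simp_all
qed

lemma zero_second_deriv: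
  fixes p p' :: "real \<Rightarrow> real"
  assumes d1: "\<forall>x\<in>{0..1}. (p has_real_derivative p' x) (at x within {0..1})"
    and d2: "\<forall>x\<in>{0..1}. (p' has_real_derivative 0) (at x within {0..1})"
    and p0: "p 0 = 0" and p1: "p 1 = 0"
  shows "\<forall>x\<in>{0..1}. p x = 0"
proof -
  obtain c where c: "\<forall>x\<in>{0..1}. p' x = c"
    using has_field_derivative_zero_constant[of "{0..1}" p'] d2 by auto
  have "\<forall>x\<in>{0..1}. ((\<lambda>x. p x - c * x) has_real_derivative 0) (at x within {0..1})"
  proof
    fix x :: real assume x: "x \<in> {0..1}"
    show "((\<lambda>x. p x - c * x) has_real_derivative 0) (at x within {0..1})"
      using d1 x c by (auto intro!: derivative_eq_intros)
  qed
  then obtain e where e: "\<forall>x\<in>{0..1}. p x - c * x = e"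
    using has_field_derivative_zero_constant[of "{0..1}" "\<lambda>x. p x - c * x"] by auto
  have "e = 0" using e p0 by force
  moreover have "c = 0" using e p1 \<open>e = 0\<close> by force
  ultimately show ?thesis using e by auto
qed

lemma green_rep:
  fixes f f' h :: "real \<Rightarrow> real"
  assumes d1: "\<forall>x\<in>{0..1}. (f has_real_derivative f' x) (at x within {0..1})"
    and d2: "\<forall>x\<in>{0..1}. (f' has_real_derivative h x) (at x within {0..1})"
    and hc: "continuous_on {0..1} h" and f0: "f 0 = 0" and f1: "f 1 = 0"
  shows "\<forall>x\<in>{0..1}. f x = Sop h x"
proof -
  note S = Sop_props[OF hc]
  have "\<forall>x\<in>{0..1}. (\<lambda>x. f x - Sop h x) x = 0"
  proof (rule zero_second_deriv[where p'="\<lambda>x. f' x - Sd h x"])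
    show "\<forall>x\<in>{0..1}. ((\<lambda>x. f x - Sop h x) has_real_derivative f' x - Sd h x) (at x within {0..1})"
      using d1 S(1) by (auto intro!: derivative_eq_intros)
    show "\<forall>x\<in>{0..1}. ((\<lambda>x. f' x - Sd h x) has_real_derivative 0) (at x within {0..1})"
      using d2 S(2) by (auto intro!: derivative_eq_intros)
  qed (use f0 f1 S(4,5) in auto)
  then show ?thesis by auto
qed

lemma leib:
  fixes Phi Phit :: "real \<Rightarrow> real \<Rightarrow> real"
  assumes d: "\<forall>x\<in>{a..b}. \<forall>t\<in>{t0..}. ((\<lambda>s. Phi x s) has_real_derivative Phit x t) (at t within {t0..})"
    and c: "continuous_on ({t0..} \<times> {a..b}) (\<lambda>p. Phit (snd p) (fst p))"
    and ci: "\<forall>t\<in>{t0..}. continuous_on {a..b} (\<lambda>x. Phi x t)"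
    and t: "t \<in> {t0..}"
  shows "((\<lambda>s. integral {a..b} (\<lambda>x. Phi x s)) has_real_derivative integral {a..b} (\<lambda>x. Phit x t)) (at t within {t0..})"
proof -
  have "((\<lambda>s. integral (cbox a b) (\<lambda>x. Phi x s)) has_field_derivative integral (cbox a b) (\<lambda>x. Phit x t)) (at t within {t0..})"
  proof (rule leibniz_rule_field_derivative[where f="\<lambda>s x. Phi x s" and fx="\<lambda>s x. Phit x s"])
    show "\<And>s x. s \<in> {t0..} \<Longrightarrow> x \<in> cbox a b \<Longrightarrow> ((\<lambda>s. Phi x s) has_field_derivative Phit x s) (at s within {t0..})"
      using d by auto
    show "\<And>s. s \<in> {t0..} \<Longrightarrow> (\<lambda>x. Phi x s) integrable_on cbox a b"
      using ci by (auto intro!: integrable_continuous_interval)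
    show "continuous_on ({t0..} \<times> cbox a b) (\<lambda>(s, x). Phit x s)"
      using c by (simp add: case_prod_beta)
  qed (use t in auto)
  then show ?thesis by simp
qed

lemma swap_cont:
  fixes f :: "real \<Rightarrow> real \<Rightarrow> real"
  assumes "continuous_on (A \<times> B) (\<lambda>(x, t). f x t)"
  shows "continuous_on (B \<times> A) (\<lambda>p. f (snd p) (fst p))"
proof -
  have "continuous_on (B \<times> A) ((\<lambda>(x, t). f x t) \<circ> (\<lambda>p. (snd p, fst p)))"
    by (rule continuous_on_compose) (auto intro!: continuous_intros continuous_on_subset[OF assms])
  then show ?thesis by (simp add: o_def)
qed

lemma exp_decay:
  fixes g g' :: "real \<Rightarrow> real"
  assumes d: "\<forall>t\<in>{t0..}. (g has_real_derivative g' t) (at t within {t0..})"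
    and le: "\<forall>t>t0. g' t \<le> - c * g t"
    and t: "t \<ge> t0"
  shows "g t \<le> exp (- c * (t - t0)) * g t0"
proof (cases "t = t0")
  case True then show ?thesis by simp
next
  case False
  with t have tt: "t0 < t" by simp
  define h where "h s = exp (c * (s - t0)) * g s" for s
  define h' where "h' s = exp (c * (s - t0)) * (c * g s + g' s)" for s
  have hd: "(h has_derivative (\<lambda>y. h' s * y)) (at s within {t0..t})" if "t0 \<le> s" "s \<le> t" for s
  proof -
    have "(h has_real_derivative h' s) (at s within {t0..})"
      unfolding h_def h'_def using d that
      by (auto intro!: derivative_eq_intros simp: algebra_simps)
    then have "(h has_real_derivative h' s) (at s within {t0..t})" by (rule DERIV_subset) auto
    then show ?thesis by (simp add: has_field_derivative_def)
  qed
  obtain z where z: "z \<in> {t0<..<t}" "h t - h t0 = h' z * (t - t0)"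
    using mvt_simple[OF tt, of h "\<lambda>s y. h' s * y"] hd by auto
  have "c * g z + g' z \<le> 0" using le z(1) by auto
  then have "h' z \<le> 0" unfolding h'_def by (simp add: mult_nonneg_nonpos)
  then have "h' z * (t - t0) \<le> 0" using tt by (simp add: mult_nonpos_nonneg)
  then have "h t \<le> h t0" using z by simp
  then have "exp (c * (t - t0)) * g t \<le> g t0" unfolding h_def by simp
  then have "exp (- c * (t - t0)) * (exp (c * (t - t0)) * g t) \<le> exp (- c * (t - t0)) * g t0"
    by (rule mult_left_mono) simp
  then show ?thesis by (simp add: exp_minus_inverse mult.assoc[symmetric] exp_add[symmetric])
qed

lemma antideriv:
  fixes F :: "real \<Rightarrow> real"
  assumes c: "continuous_on UNIV F"
  shows "\<exists>G. G 0 = 0 \<and> (\<forall>s. (G has_real_derivative F s) (at s))"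
proof -
  define G where "G s = integral {0..s} F - integral {s..0} F" for s
  have "(G has_real_derivative F s0) (at s0)" for s0
  proof -
    define N where "N = \<bar>s0\<bar> + 1"
    have N: "-N < s0" "s0 < N" "N > 0" unfolding N_def by auto
    have eq: "integral {-N..s} F - integral {-N..0} F = G s" if "s \<in> {-N<..<N}" for s
    proof (cases "s \<ge> 0")
      case True
      have "integral {-N..0} F + integral {0..s} F = integral {-N..s} F"
        by (rule Henstock_Kurzweil_Integration.integral_combine) (use True N in \<open>auto intro!: integrable_continuous_interval continuous_on_subset[OF c]\<close>)
      moreover have "integral {s..0} F = 0" using True
        by (cases "s = 0") auto
      ultimately show ?thesis unfolding G_def by simp
    next
      case False
      have "integral {-N..s} F + integral {s..0} F = integral {-N..0} F"
        by (rule Henstock_Kurzweil_Integration.integral_combine) (use False that in \<open>auto intro!: integrable_continuous_interval continuous_on_subset[OF c]\<close>)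
      moreover have "integral {0..s} F = 0" using False by simp
      ultimately show ?thesis unfolding G_def by simp
    qed
    have "((\<lambda>s. integral {-N..s} F - integral {-N..0} F) has_real_derivative F s0) (at s0 within {-N..N})"
      using integral_has_real_derivative[of "-N" N F s0] N
      by (auto intro!: derivative_eq_intros continuous_on_subset[OF c])
    then have "((\<lambda>s. integral {-N..s} F - integral {-N..0} F) has_real_derivative F s0) (at s0)"
      using N by (subst (asm) at_within_interior) auto
    then show ?thesis
      by (rule has_field_derivative_transform_within_open[where S="{-N<..<N}"]) (use N eq in auto)
  qed
  moreover have "G 0 = 0" unfolding G_def by simp
  ultimately show ?thesis by blast
qed

lemma F_sign:
  fixes F F' :: "real \<Rightarrow> real"
  assumes d: "\<forall>s. (F has_real_derivative F' s) (at s)" and le: "\<forall>s. F' s \<le> K" and F0: "F 0 = 0"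
  shows "s * F s \<le> K * s\<^sup>2"
proof -
  define phi where "phi s = K * s - F s" for s
  have pd: "DERIV phi x :> K - F' x" for x unfolding phi_def using d by (auto intro!: derivative_eq_intros)
  have phi0: "phi 0 = 0" unfolding phi_def using F0 by simp
  show ?thesis
  proof (cases "s \<ge> 0")
    case True
    have "phi 0 \<le> phi s"
    proof (rule DERIV_nonneg_imp_nondecreasing[where f=phi, OF True])
      fix x show "\<exists>y. DERIV phi x :> y \<and> 0 \<le> y" using pd[of x] le by (intro exI[of _ "K - F' x"]) auto
    qed
    then have "F s \<le> K * s" using phi0 unfolding phi_def by simp
    then have "s * F s \<le> s * (K * s)" by (rule mult_left_mono[OF _ True])
    then show ?thesis by (simp add: power2_eq_square algebra_simps)
  next
    case False
    have "phi s \<le> phi 0"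
    proof (rule DERIV_nonneg_imp_nondecreasing[where f=phi])
      fix x show "\<exists>y. DERIV phi x :> y \<and> 0 \<le> y" using pd[of x] le by (intro exI[of _ "K - F' x"]) auto
    qed (use False in auto)
    then have "F s \<ge> K * s" using phi0 unfolding phi_def by simp
    then have "s * F s \<le> s * (K * s)" using False by (intro mult_left_mono_neg) auto
    then show ?thesis by (simp add: power2_eq_square algebra_simps)
  qed
qed

lemma G_upper:
  fixes F F' G :: "real \<Rightarrow> real"
  assumes d: "\<forall>s. (F has_real_derivative F' s) (at s)" and le: "\<forall>s. F' s \<le> K" and F0: "F 0 = 0"
    and dG: "\<forall>s. (G has_real_derivative F s) (at s)" and G0: "G 0 = 0"
  shows "G s \<le> K * s\<^sup>2 / 2"
proof -
  define psi where "psi s = K * s\<^sup>2 / 2 - G s" for s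
  have pd: "DERIV psi x :> K * x - F x" for x unfolding psi_def using dG by (auto intro!: derivative_eq_intros)
  have psi0: "psi 0 = 0" unfolding psi_def using G0 by simp
  have Fs: "x * F x \<le> K * x\<^sup>2" for x by (rule F_sign[OF d le F0])
  have pos: "K * x - F x \<ge> 0" if "x > 0" for x
  proof -
    have "x * F x \<le> x * (K * x)" using Fs[of x] by (simp add: power2_eq_square ac_simps)
    then show ?thesis using that by simp
  qed
  have neg: "K * x - F x \<le> 0" if "x < 0" for x
  proof -
    have "x * F x \<le> x * (K * x)" using Fs[of x] by (simp add: power2_eq_square ac_simps)
    then have "F x \<ge> K * x" using that by (simp add: mult_le_cancel_left)
    then show ?thesis by simp
  qed
  have "psi s \<ge> 0"
  proof (cases "s \<ge> 0")
    case True
    have "psi 0 \<le> psi s"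
    proof (rule DERIV_nonneg_imp_nondecreasing[where f=psi, OF True])
      fix x assume "0 \<le> x" "x \<le> s"
      then have "K * x - F x \<ge> 0" using pos[of x] F0 by (cases "x = 0") auto
      then show "\<exists>y. DERIV psi x :> y \<and> 0 \<le> y" using pd[of x] by (intro exI[of _ "K * x - F x"]) auto
    qed
    then show ?thesis using psi0 by simp
  next
    case False
    have "psi 0 \<le> psi s"
    proof (rule DERIV_nonpos_imp_nonincreasing[where f=psi])
      fix x assume "s \<le> x" "x \<le> 0"
      then have "K * x - F x \<le> 0" using neg[of x] F0 by (cases "x = 0") auto
      then show "\<exists>y. DERIV psi x :> y \<and> y \<le> 0" using pd[of x] by (intro exI[of _ "K * x - F x"]) auto
    qed (use False in auto)
    then show ?thesis using psi0 by simp
  qed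
  then show ?thesis unfolding psi_def by simp
qed

lemma F_lip:
  fixes F F' :: "real \<Rightarrow> real"
  assumes d: "\<forall>s. (F has_real_derivative F' s) (at s)" and F0: "F 0 = 0"
    and L: "\<forall>r. \<bar>r\<bar> \<le> M \<longrightarrow> \<bar>F' r\<bar> \<le> L" and s: "\<bar>s\<bar> \<le> M"
  shows "\<bar>F s\<bar> \<le> L * \<bar>s\<bar>"
proof (cases "s = 0")
  case True then show ?thesis using F0 by simp
next
  case False
  show ?thesis
  proof (cases "s > 0")
    case True
    obtain z where z: "0 < z" "z < s" "F s - F 0 = (s - 0) * F' z"
      using MVT2[OF True, of F F'] d by auto
    have "\<bar>F' z\<bar> \<le> L" using L z s by auto
    then show ?thesis using z F0 True by (simp add: abs_mult mult.commute mult_left_mono)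
  next
    case False
    with \<open>s \<noteq> 0\<close> have sn: "s < 0" by simp
    obtain z where z: "s < z" "z < 0" "F 0 - F s = (0 - s) * F' z"
      using MVT2[OF sn, of F F'] d by auto
    have "\<bar>F' z\<bar> \<le> L" using L z s by auto
    then have "\<bar>F s\<bar> = \<bar>s\<bar> * \<bar>F' z\<bar>" using z F0 by (simp add: abs_mult)
    also have "\<dots> \<le> \<bar>s\<bar> * L" using \<open>\<bar>F' z\<bar> \<le> L\<close> by (simp add: mult_left_mono)
    finally show ?thesis by (simp add: mult.commute)
  qed
qed

lemma G_lower:
  fixes F F' G :: "real \<Rightarrow> real"
  assumes d: "\<forall>s. (F has_real_derivative F' s) (at s)" and F0: "F 0 = 0"
    and L: "\<forall>r. \<bar>r\<bar> \<le> M \<longrightarrow> \<bar>F' r\<bar> \<le> L"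
    and dG: "\<forall>s. (G has_real_derivative F s) (at s)" and G0: "G 0 = 0" and s: "\<bar>s\<bar> \<le> M"
  shows "G s \<ge> - L * s\<^sup>2 / 2"
proof -
  define psi where "psi s = G s + L * s\<^sup>2 / 2" for s
  have pd: "DERIV psi x :> F x + L * x" for x unfolding psi_def using dG by (auto intro!: derivative_eq_intros)
  have psi0: "psi 0 = 0" unfolding psi_def using G0 by simp
  have Fb: "\<bar>F x\<bar> \<le> L * \<bar>x\<bar>" if "\<bar>x\<bar> \<le> M" for x by (rule F_lip[OF d F0 L that])
  have "psi s \<ge> 0"
  proof (cases "s \<ge> 0")
    case True
    have "psi 0 \<le> psi s"
    proof (rule DERIV_nonneg_imp_nondecreasing[where f=psi, OF True])
      fix x assume x: "0 \<le> x" "x \<le> s"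
      then have "\<bar>F x\<bar> \<le> L * x" using Fb[of x] s by auto
      then show "\<exists>y. DERIV psi x :> y \<and> 0 \<le> y" using pd[of x] by (intro exI[of _ "F x + L * x"]) auto
    qed
    then show ?thesis using psi0 by simp
  next
    case False
    have "psi 0 \<le> psi s"
    proof (rule DERIV_nonpos_imp_nonincreasing[where f=psi])
      fix x assume x: "s \<le> x" "x \<le> 0"
      then have "\<bar>F x\<bar> \<le> L * (- x)" using Fb[of x] s by auto
      then show "\<exists>y. DERIV psi x :> y \<and> y \<le> 0" using pd[of x] by (intro exI[of _ "F x + L * x"]) auto
    qed (use False in auto)
    then show ?thesis using psi0 by simp
  qed
  then show ?thesis unfolding psi_def by simp
qed

definition LFb :: "(real \<Rightarrow> real) \<Rightarrow> real \<Rightarrow> real" where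
  "LFb F' M = Sup ((\<lambda>r. \<bar>F' r\<bar>) ` {-M..M})"

lemma LFb_props:
  assumes c: "continuous_on UNIV F'" and M: "M \<ge> 0"
  shows "\<forall>r. \<bar>r\<bar> \<le> M \<longrightarrow> \<bar>F' r\<bar> \<le> LFb F' M" and "LFb F' M \<ge> 0"
    and "\<And>M'. M \<le> M' \<Longrightarrow> LFb F' M \<le> LFb F' M'"
proof -
  have bdd: "bdd_above ((\<lambda>r. \<bar>F' r\<bar>) ` {-M'..M'})" for M'
    by (rule bounded_imp_bdd_above, rule compact_imp_bounded, rule compact_continuous_image)
      (auto intro!: continuous_intros continuous_on_subset[OF c])
  show "\<forall>r. \<bar>r\<bar> \<le> M \<longrightarrow> \<bar>F' r\<bar> \<le> LFb F' M"
  proof (intro allI impI)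
    fix r :: real assume "\<bar>r\<bar> \<le> M"
    then have "r \<in> {-M..M}" by auto
    then show "\<bar>F' r\<bar> \<le> LFb F' M" unfolding LFb_def by (intro cSup_upper bdd imageI)
  qed
  show "LFb F' M \<ge> 0"
  proof -
    have "\<bar>F' 0\<bar> \<in> (\<lambda>r. \<bar>F' r\<bar>) ` {-M..M}" using M by force
    then show ?thesis unfolding LFb_def by (intro order.trans[OF abs_ge_zero cSup_upper[OF _ bdd]])
  qed
  show "LFb F' M \<le> LFb F' M'" if "M \<le> M'" for M'
    unfolding LFb_def using M that by (intro cSup_subset_mono bdd) auto
qed

lemma deriv_transform_set:
  fixes f g :: "real \<Rightarrow> real"
  assumes "\<forall>y\<in>S. f y = g y" "x \<in> S" "(f has_real_derivative D) (at x within S)"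
  shows "(g has_real_derivative D) (at x within S)"
  by (rule has_field_derivative_transform_within[OF assms(3) zero_less_one assms(2)]) (use assms(1) in auto)

lemma deriv_unique_Ici:
  fixes f :: "real \<Rightarrow> real"
  assumes t: "t0 \<le> t" and d1: "(f has_real_derivative D1) (at t within {t0..})"
    and d2: "(f has_real_derivative D2) (at t within {t0..})"
  shows "D1 = D2"
proof -
  have "at_right t \<le> at t within {t0..}" using t by (intro at_le) auto
  then have nb: "at t within {t0..} \<noteq> bot" using trivial_limit_at_right_real[of t]
    by (metis bot.extremum_uniqueI)
  show ?thesis
    using vector_derivative_unique_within[OF nb] d1 d2
    by (simp add: has_real_derivative_iff_has_vector_derivative)
qed

lemma cont_slice:
  fixes f :: "real \<Rightarrow> real \<Rightarrow> real"
  assumes "continuous_on ({0..1} \<times> {t0..}) (\<lambda>(x, t). f x t)" "t \<ge> t0"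
  shows "continuous_on {0..1} (\<lambda>x. f x t)"
proof -
  have "continuous_on {0..1} ((\<lambda>(x, t). f x t) \<circ> (\<lambda>x. (x, t)))"
    by (rule continuous_on_compose) (use assms in \<open>auto intro!: continuous_intros continuous_on_subset[OF assms(1)]\<close>)
  then show ?thesis by (simp add: o_def)
qed

locale sol =
  fixes eps K A A' tau :: real
    and F F' G :: "real \<Rightarrow> real"
    and a :: "real \<Rightarrow> real \<Rightarrow> real \<Rightarrow> real \<Rightarrow> real \<Rightarrow> real \<Rightarrow> real"
    and t0 :: real
    and u ux uxx ut utt uxxt :: "real \<Rightarrow> real \<Rightarrow> real"
  assumes eps_pos: "eps > 0"
    and F_deriv: "\<forall>s. (F has_real_derivative F' s) (at s)"
    and F'_cont: "continuous_on UNIV F'"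
    and F0: "F 0 = 0"
    and K_pos: "K > 0" and F'_le: "\<forall>s. F' s \<le> K" and K_less: "K < 3 * pi\<^sup>2 / 4"
    and a_bdd_below: "bdd_below ((\<lambda>(x, t, p, q, r, s). a x t p q r s) `
                   ({0<..<1} \<times> {0..} \<times> UNIV \<times> UNIV \<times> UNIV \<times> UNIV))"
    and nu_pos: "eps * pi\<^sup>2 + Inf ((\<lambda>(x, t, p, q, r, s). a x t p q r s) `
                   ({0<..<1} \<times> {0..} \<times> UNIV \<times> UNIV \<times> UNIV \<times> UNIV)) > 0"
    and tau: "0 \<le> tau" "tau < 2"
    and A_pos: "A > 0" and A'_nonneg: "A' \<ge> 0"
    and a_growth: "\<forall>phi phix phixx psi. in_Gamma phi phix phixx psi \<longrightarrow>
                     (\<forall>x\<in>{0<..<1}. \<forall>t\<ge>0.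
                        a x t (phi x) (phix x) (phixx x) (psi x)
                          \<le> A * rpow (dG phi phix phixx psi) tau + A')"
    and G0: "G 0 = 0" and G_deriv: "\<forall>s. (G has_real_derivative F s) (at s)"
    and t0: "t0 \<ge> 0"
    and cont: "\<forall>f \<in> {u, ux, uxx, ut, utt, uxxt}. continuous_on ({0..1} \<times> {t0..}) (\<lambda>(x, t). f x t)"
    and derivs: "\<forall>x\<in>{0..1}. \<forall>t\<in>{t0..}.
            ((\<lambda>y. u y t) has_real_derivative ux x t) (at x within {0..1})
          \<and> ((\<lambda>y. ux y t) has_real_derivative uxx x t) (at x within {0..1})
          \<and> ((\<lambda>s. u x s) has_real_derivative ut x t) (at t within {t0..})
          \<and> ((\<lambda>s. ut x s) has_real_derivative utt x t) (at t within {t0..})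
          \<and> ((\<lambda>s. uxx x s) has_real_derivative uxxt x t) (at t within {t0..})"
    and bc: "\<forall>t\<in>{t0..}. u 0 t = 0 \<and> u 1 t = 0"
    and pde: "\<forall>x\<in>{0<..<1}. \<forall>t\<in>{t0<..}.
            - eps * uxxt x t + utt x t - uxx x t
              = F (u x t) - a x t (u x t) (ux x t) (uxx x t) (ut x t) * ut x t"
begin

lemma F_cont: "continuous_on UNIV F"
  using F_deriv by (meson DERIV_continuous continuous_at_imp_continuous_on)
lemma G_cont: "continuous_on UNIV G"
  using G_deriv by (meson DERIV_continuous continuous_at_imp_continuous_on)

lemma jc_u: "continuous_on ({t0..} \<times> {0..1}) (\<lambda>p. u (snd p) (fst p))" using cont by (intro swap_cont) auto
lemma jc_ux: "continuous_on ({t0..} \<times> {0..1}) (\<lambda>p. ux (snd p) (fst p))" using cont by (intro swap_cont) auto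
lemma jc_uxx: "continuous_on ({t0..} \<times> {0..1}) (\<lambda>p. uxx (snd p) (fst p))" using cont by (intro swap_cont) auto
lemma jc_ut: "continuous_on ({t0..} \<times> {0..1}) (\<lambda>p. ut (snd p) (fst p))" using cont by (intro swap_cont) auto
lemma jc_utt: "continuous_on ({t0..} \<times> {0..1}) (\<lambda>p. utt (snd p) (fst p))" using cont by (intro swap_cont) auto
lemma jc_uxxt: "continuous_on ({t0..} \<times> {0..1}) (\<lambda>p. uxxt (snd p) (fst p))" using cont by (intro swap_cont) auto

lemma jc_Fu: "continuous_on ({t0..} \<times> {0..1}) (\<lambda>p. F (u (snd p) (fst p)))"
  by (rule continuous_on_compose2[OF F_cont jc_u]) auto
lemma jc_Gu: "continuous_on ({t0..} \<times> {0..1}) (\<lambda>p. G (u (snd p) (fst p)))"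
  by (rule continuous_on_compose2[OF G_cont jc_u]) auto

lemmas jcs = jc_u jc_ux jc_uxx jc_ut jc_utt jc_uxxt jc_Fu jc_Gu

context fixes t assumes t: "t \<ge> t0"
begin
lemma sc_u: "continuous_on {0..1} (\<lambda>x. u x t)" using cont t by (intro cont_slice) auto
lemma sc_ux: "continuous_on {0..1} (\<lambda>x. ux x t)" using cont t by (intro cont_slice) auto
lemma sc_uxx: "continuous_on {0..1} (\<lambda>x. uxx x t)" using cont t by (intro cont_slice) auto
lemma sc_ut: "continuous_on {0..1} (\<lambda>x. ut x t)" using cont t by (intro cont_slice) auto
lemma sc_utt: "continuous_on {0..1} (\<lambda>x. utt x t)" using cont t by (intro cont_slice) auto
lemma sc_uxxt: "continuous_on {0..1} (\<lambda>x. uxxt x t)" using cont t by (intro cont_slice) auto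
lemma sc_Fu: "continuous_on {0..1} (\<lambda>x. F (u x t))" by (rule continuous_on_compose2[OF F_cont sc_u]) auto
lemma sc_Gu: "continuous_on {0..1} (\<lambda>x. G (u x t))" by (rule continuous_on_compose2[OF G_cont sc_u]) auto
end

lemmas scs = sc_u sc_ux sc_uxx sc_ut sc_utt sc_uxxt sc_Fu sc_Gu

lemma u_rep: "t \<ge> t0 \<Longrightarrow> x \<in> {0..1} \<Longrightarrow> u x t = Sop (\<lambda>y. uxx y t) x"
  using green_rep[of "\<lambda>y. u y t" "\<lambda>y. ux y t" "\<lambda>y. uxx y t"] derivs bc sc_uxx by auto

lemma wint_deriv:
  assumes x: "x \<in> {0..1}" and t: "t \<ge> t0" and c: "continuous_on {0..1} c"
  shows "((\<lambda>s. integral {0..x} (\<lambda>y. c y * uxx y s)) has_real_derivative integral {0..x} (\<lambda>y. c y * uxxt y t)) (at t within {t0..})"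
proof (rule leib)
  show "\<forall>y\<in>{0..x}. \<forall>t\<in>{t0..}. ((\<lambda>s. c y * uxx y s) has_real_derivative c y * uxxt y t) (at t within {t0..})"
    using derivs x by (auto intro!: derivative_eq_intros)
  have sub: "{t0..} \<times> {0..x} \<subseteq> {t0..} \<times> {0..1}" using x by auto
  have cc: "continuous_on ({t0..} \<times> {0..x}) (\<lambda>p. c (snd p))"
    by (rule continuous_on_compose2[OF c]) (use x in \<open>auto intro!: continuous_intros\<close>)
  show "continuous_on ({t0..} \<times> {0..x}) (\<lambda>p. c (snd p) * uxxt (snd p) (fst p))"
    by (intro continuous_intros cc continuous_on_subset[OF jc_uxxt sub])
  show "\<forall>t\<in>{t0..}. continuous_on {0..x} (\<lambda>y. c y * uxx y t)"
    using x by (auto intro!: continuous_intros continuous_on_subset[OF c] continuous_on_subset[OF sc_uxx])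
qed (use t in auto)

lemma Sop_t_deriv:
  assumes x: "x \<in> {0..1}" and t: "t \<ge> t0"
  shows "((\<lambda>s. Sop (\<lambda>y. uxx y s) x) has_real_derivative Sop (\<lambda>y. uxxt y t) x) (at t within {t0..})"
proof -
  have c1: "continuous_on {0..1} (\<lambda>y::real. y)" by (intro continuous_intros)
  have c2: "continuous_on {0..1} (\<lambda>y::real. 1 - y)" by (intro continuous_intros)
  have one: "(1::real) \<in> {0..1}" by simp
  note d1 = wint_deriv[OF x t c1] and d2 = wint_deriv[OF x t c2] and d3 = wint_deriv[OF one t c2]
  show ?thesis
    unfolding Sop_def Pint_def Qint_def
    by (rule derivative_eq_intros d1 d2 d3 | simp)+
qed

lemma ut_rep: "t \<ge> t0 \<Longrightarrow> x \<in> {0..1} \<Longrightarrow> ut x t = Sop (\<lambda>y. uxxt y t) x"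
proof -
  assume t: "t \<ge> t0" and x: "x \<in> {0..1}"
  have "((\<lambda>s. u x s) has_real_derivative Sop (\<lambda>y. uxxt y t) x) (at t within {t0..})"
    by (rule deriv_transform_set[OF _ _ Sop_t_deriv[OF x t]]) (use u_rep x t in auto)
  moreover have "((\<lambda>s. u x s) has_real_derivative ut x t) (at t within {t0..})" using derivs x t by auto
  ultimately show ?thesis using deriv_unique_Ici[OF t] by metis
qed

definition vt :: "real \<Rightarrow> real \<Rightarrow> real" where "vt x t = Sd (\<lambda>y. uxxt y t) x"

context fixes t assumes t: "t \<ge> t0"
begin
lemma ut_d1: "\<forall>x\<in>{0..1}. ((\<lambda>y. ut y t) has_real_derivative vt x t) (at x within {0..1})"
  using Sop_props(1)[OF sc_uxxt[OF t]] ut_rep[OF t] unfolding vt_def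
  by (auto intro: deriv_transform_set[where f="Sop (\<lambda>y. uxxt y t)"])
lemma ut_d2: "\<forall>x\<in>{0..1}. ((\<lambda>y. vt y t) has_real_derivative uxxt x t) (at x within {0..1})"
  using Sop_props(2)[OF sc_uxxt[OF t]] unfolding vt_def by auto
lemma sc_vt: "continuous_on {0..1} (\<lambda>x. vt x t)"
  using Sop_props(3)[OF sc_uxxt[OF t]] unfolding vt_def by auto
lemma ut_bc: "ut 0 t = 0" "ut 1 t = 0"
  using Sop_props(4,5)[OF sc_uxxt[OF t]] ut_rep[OF t] by auto
lemma u_bc: "u 0 t = 0" "u 1 t = 0" using bc t by auto
lemma u_d1: "\<forall>x\<in>{0..1}. ((\<lambda>y. u y t) has_real_derivative ux x t) (at x within {0..1})"
  using derivs t by auto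
lemma u_d2: "\<forall>x\<in>{0..1}. ((\<lambda>y. ux y t) has_real_derivative uxx x t) (at x within {0..1})"
  using derivs t by auto
end

end

context sol begin

definition "nu2 t = integral {0..1} (\<lambda>x. (u x t)\<^sup>2)"
definition "Qf t = integral {0..1} (\<lambda>x. (ux x t)\<^sup>2)"
definition "Wf t = integral {0..1} (\<lambda>x. (uxx x t)\<^sup>2)"
definition "V2 t = integral {0..1} (\<lambda>x. (ut x t)\<^sup>2)"
definition "D1 t = integral {0..1} (\<lambda>x. (vt x t)\<^sup>2)"
definition "Qm t = - integral {0..1} (\<lambda>x. u x t * uxx x t)"
definition "Gi t = integral {0..1} (\<lambda>x. G (u x t))"
definition "UU t = integral {0..1} (\<lambda>x. u x t * ut x t)"
definition "Y t = integral {0..1} (\<lambda>x. (eps * uxx x t - ut x t)\<^sup>2)"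
definition "R x t = F (u x t) + eps * uxxt x t + uxx x t - utt x t"
definition "E1 t = V2 t / 2 + Qm t / 2 - Gi t"
definition "J t = UU t + eps / 2 * Qm t"
definition "a0 = Inf ((\<lambda>(x, t, p, q, r, s). a x t p q r s) `
                   ({0<..<1} \<times> {0..} \<times> UNIV \<times> UNIV \<times> UNIV \<times> UNIV))"
definition "H t = integral {0..1} (\<lambda>x. R x t * ut x t) - a0 * V2 t"
definition "Rn t = integral {0..1} (\<lambda>x. (R x t)\<^sup>2)"
definition "dd t = dG (\<lambda>x. u x t) (\<lambda>x. ux x t) (\<lambda>x. uxx x t) (\<lambda>x. ut x t)"
definition "Mt t = A * rpow (dd t) tau + A'"

lemma jc_R: "continuous_on ({t0..} \<times> {0..1}) (\<lambda>p. R (snd p) (fst p))"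
  unfolding R_def by (intro continuous_intros jcs)
lemma sc_R: "t \<ge> t0 \<Longrightarrow> continuous_on {0..1} (\<lambda>x. R x t)"
  unfolding R_def by (intro continuous_intros scs) auto

lemma ii: "continuous_on {0..1} f \<Longrightarrow> f integrable_on {0..1}" for f :: "real \<Rightarrow> real"
  by (rule integrable_continuous_interval)

context fixes t assumes t: "t \<ge> t0"
begin

lemma Qm_eq: "Qm t = Qf t"
  using ibp01[OF u_d1[OF t] u_d2[OF t] sc_ux[OF t] sc_uxx[OF t]] u_bc[OF t]
  unfolding Qm_def Qf_def by (simp add: power2_eq_square)

lemma S2: "integral {0..1} (\<lambda>x. ut x t * uxxt x t) = - D1 t"
  using ibp01[OF ut_d1[OF t] ut_d2[OF t] sc_vt[OF t] sc_uxxt[OF t]] ut_bc[OF t]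
  unfolding D1_def by (simp add: power2_eq_square)

lemma S3: "integral {0..1} (\<lambda>x. u x t * uxxt x t) = integral {0..1} (\<lambda>x. ut x t * uxx x t)"
proof -
  have "integral {0..1} (\<lambda>x. u x t * uxxt x t) = - integral {0..1} (\<lambda>x. ux x t * vt x t)"
    using ibp01[OF u_d1[OF t] ut_d2[OF t] sc_ux[OF t] sc_uxxt[OF t]] u_bc[OF t] by simp
  moreover have "integral {0..1} (\<lambda>x. ut x t * uxx x t) = - integral {0..1} (\<lambda>x. vt x t * ux x t)"
    using ibp01[OF ut_d1[OF t] u_d2[OF t] sc_vt[OF t] sc_uxx[OF t]] ut_bc[OF t] by simp
  ultimately show ?thesis by (simp add: mult.commute)
qed

lemma wirt_ut: "pi\<^sup>2 * V2 t \<le> D1 t"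
  unfolding V2_def D1_def by (rule wirtinger[OF ut_d1[OF t] sc_vt[OF t] ut_bc[OF t]])

lemma wirt_u: "pi\<^sup>2 * nu2 t \<le> Qf t"
  unfolding nu2_def Qf_def by (rule wirtinger[OF u_d1[OF t] sc_ux[OF t] u_bc[OF t]])

lemma supb: "x \<in> {0..1} \<Longrightarrow> (u x t)\<^sup>2 \<le> Qf t"
  unfolding Qf_def by (rule sup_bound[OF u_d1[OF t] sc_ux[OF t] u_bc(1)[OF t]])

lemma nonnegs: "nu2 t \<ge> 0" "Qf t \<ge> 0" "Wf t \<ge> 0" "V2 t \<ge> 0" "D1 t \<ge> 0" "Y t \<ge> 0" "Rn t \<ge> 0"
  unfolding nu2_def Qf_def Wf_def V2_def D1_def Y_def Rn_def
  by (auto intro!: integral_nonneg ii continuous_intros scs sc_vt sc_R t)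

lemma dd_sq: "(dd t)\<^sup>2 = nu2 t + Qf t + Wf t + V2 t" and dd_nn: "dd t \<ge> 0"
proof -
  have "integral {0..1} (\<lambda>x. (u x t)\<^sup>2 + (ux x t)\<^sup>2 + (uxx x t)\<^sup>2 + (ut x t)\<^sup>2) = nu2 t + Qf t + Wf t + V2 t"
    unfolding nu2_def Qf_def Wf_def V2_def
    by (subst integral_add, auto intro!: ii continuous_intros scs t)+
  moreover have "nu2 t + Qf t + Wf t + V2 t \<ge> 0" using nonnegs by simp
  ultimately show "(dd t)\<^sup>2 = nu2 t + Qf t + Wf t + V2 t" "dd t \<ge> 0"
    unfolding dd_def dG_def by simp_all
qed

end

end

lemma int_lin2:
  fixes f g :: "real \<Rightarrow> real"
  assumes "continuous_on {0..1} f" "continuous_on {0..1} g"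
  shows "integral {0..1} (\<lambda>x. c1 * f x + c2 * g x) = c1 * integral {0..1} f + c2 * integral {0..1} g"
proof -
  have "((\<lambda>x. c1 *\<^sub>R f x + c2 *\<^sub>R g x) has_integral c1 *\<^sub>R integral {0..1} f + c2 *\<^sub>R integral {0..1} g) {0..1}"
    using assms by (intro has_integral_add has_integral_cmul integrable_integral integrable_continuous_interval)
  then show ?thesis by (simp add: integral_unique)
qed

lemma int_lin4:
  fixes f g h k :: "real \<Rightarrow> real"
  assumes "continuous_on {0..1} f" "continuous_on {0..1} g" "continuous_on {0..1} h" "continuous_on {0..1} k"
  shows "integral {0..1} (\<lambda>x. c1 * f x + c2 * g x + c3 * h x + c4 * k x) =
    c1 * integral {0..1} f + c2 * integral {0..1} g + c3 * integral {0..1} h + c4 * integral {0..1} k"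
proof -
  have "((\<lambda>x. c1 *\<^sub>R f x + c2 *\<^sub>R g x + c3 *\<^sub>R h x + c4 *\<^sub>R k x) has_integral
      c1 *\<^sub>R integral {0..1} f + c2 *\<^sub>R integral {0..1} g + c3 *\<^sub>R integral {0..1} h + c4 *\<^sub>R integral {0..1} k) {0..1}"
    using assms by (intro has_integral_add has_integral_cmul integrable_integral integrable_continuous_interval)
  then show ?thesis by (simp add: integral_unique)
qed

context sol begin

lemma dV2: "t \<ge> t0 \<Longrightarrow> (V2 has_real_derivative integral {0..1} (\<lambda>x. 2 * ut x t * utt x t)) (at t within {t0..})"
  unfolding V2_def[abs_def]
  by (rule leib) (use derivs in \<open>auto intro!: derivative_eq_intros continuous_intros jcs scs\<close>)

lemma dQm: "t \<ge> t0 \<Longrightarrow> (Qm has_real_derivative - integral {0..1} (\<lambda>x. ut x t * uxx x t + u x t * uxxt x t)) (at t within {t0..})"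
  unfolding Qm_def[abs_def]
  by (intro derivative_intros leib) (use derivs in \<open>auto intro!: derivative_eq_intros continuous_intros jcs scs\<close>)

lemma dGi: "t \<ge> t0 \<Longrightarrow> (Gi has_real_derivative integral {0..1} (\<lambda>x. F (u x t) * ut x t)) (at t within {t0..})"
  unfolding Gi_def[abs_def]
proof (rule leib)
  show "\<forall>x\<in>{0..1}. \<forall>t\<in>{t0..}. ((\<lambda>s. G (u x s)) has_real_derivative F (u x t) * ut x t) (at t within {t0..})"
    using derivs G_deriv by (auto intro!: DERIV_chain2[where f=G])
qed (auto intro!: continuous_intros jcs scs)

lemma dUU: "t \<ge> t0 \<Longrightarrow> (UU has_real_derivative integral {0..1} (\<lambda>x. ut x t * ut x t + u x t * utt x t)) (at t within {t0..})"
  unfolding UU_def[abs_def]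
  by (rule leib) (use derivs in \<open>auto intro!: derivative_eq_intros continuous_intros jcs scs\<close>)

lemma dY: "t \<ge> t0 \<Longrightarrow> (Y has_real_derivative integral {0..1} (\<lambda>x. 2 * (eps * uxx x t - ut x t) * (eps * uxxt x t - utt x t))) (at t within {t0..})"
  unfolding Y_def[abs_def]
  by (rule leib) (use derivs in \<open>auto intro!: derivative_eq_intros continuous_intros jcs scs simp: algebra_simps\<close>)

definition "E1d t = integral {0..1} (\<lambda>x. 2 * ut x t * utt x t) / 2
   + (- integral {0..1} (\<lambda>x. ut x t * uxx x t + u x t * uxxt x t)) / 2 - integral {0..1} (\<lambda>x. F (u x t) * ut x t)"
definition "Jd t = integral {0..1} (\<lambda>x. ut x t * ut x t + u x t * utt x t)
   + eps / 2 * (- integral {0..1} (\<lambda>x. ut x t * uxx x t + u x t * uxxt x t))"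
definition "Yd t = integral {0..1} (\<lambda>x. 2 * (eps * uxx x t - ut x t) * (eps * uxxt x t - utt x t))"

lemma dE1: "t \<ge> t0 \<Longrightarrow> (E1 has_real_derivative E1d t) (at t within {t0..})"
  unfolding E1_def[abs_def] E1d_def by (intro DERIV_diff DERIV_add DERIV_cdivide dV2 dQm dGi)
lemma dJ: "t \<ge> t0 \<Longrightarrow> (J has_real_derivative Jd t) (at t within {t0..})"
  unfolding J_def[abs_def] Jd_def by (intro DERIV_add DERIV_cmult dUU dQm)

context fixes t assumes t: "t \<ge> t0"
begin

lemma E1d_eq: "E1d t = - eps * D1 t - integral {0..1} (\<lambda>x. R x t * ut x t)"
proof -
  have c: "continuous_on {0..1} (\<lambda>x. ut x t * F (u x t))" "continuous_on {0..1} (\<lambda>x. ut x t * uxxt x t)"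
     "continuous_on {0..1} (\<lambda>x. ut x t * uxx x t)" "continuous_on {0..1} (\<lambda>x. R x t * ut x t)"
     "continuous_on {0..1} (\<lambda>x. u x t * uxxt x t)"
    by (auto intro!: continuous_intros scs sc_R t)
  have "integral {0..1} (\<lambda>x. 2 * ut x t * utt x t) = integral {0..1} (\<lambda>x. 2 * (ut x t * F (u x t)) + (2 * eps) * (ut x t * uxxt x t) + 2 * (ut x t * uxx x t) + (-2) * (R x t * ut x t))"
    by (rule integral_cong) (simp add: R_def algebra_simps)
  also have "\<dots> = 2 * integral {0..1} (\<lambda>x. ut x t * F (u x t)) + (2 * eps) * integral {0..1} (\<lambda>x. ut x t * uxxt x t)
      + 2 * integral {0..1} (\<lambda>x. ut x t * uxx x t) + (-2) * integral {0..1} (\<lambda>x. R x t * ut x t)"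
    by (rule int_lin4[OF c(1-4)])
  finally have e1: "integral {0..1} (\<lambda>x. 2 * ut x t * utt x t) = \<dots>" .
  have "integral {0..1} (\<lambda>x. ut x t * uxx x t + u x t * uxxt x t) = 1 * integral {0..1} (\<lambda>x. ut x t * uxx x t) + 1 * integral {0..1} (\<lambda>x. u x t * uxxt x t)"
    using int_lin2[OF c(3) c(5), of 1 1] by simp
  then have e2: "integral {0..1} (\<lambda>x. ut x t * uxx x t + u x t * uxxt x t) = 2 * integral {0..1} (\<lambda>x. ut x t * uxx x t)"
    using S3[OF t] by simp
  have e3: "integral {0..1} (\<lambda>x. F (u x t) * ut x t) = integral {0..1} (\<lambda>x. ut x t * F (u x t))"
    by (simp add: mult.commute)
  show ?thesis unfolding E1d_def e1 e2 e3 S2[OF t] by (simp add: field_simps)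
qed

lemma Jd_eq: "Jd t = V2 t + integral {0..1} (\<lambda>x. u x t * F (u x t)) - Qm t - integral {0..1} (\<lambda>x. u x t * R x t)"
proof -
  have c: "continuous_on {0..1} (\<lambda>x. u x t * F (u x t))" "continuous_on {0..1} (\<lambda>x. u x t * uxxt x t)"
     "continuous_on {0..1} (\<lambda>x. u x t * uxx x t)" "continuous_on {0..1} (\<lambda>x. u x t * R x t)"
     "continuous_on {0..1} (\<lambda>x. ut x t * uxx x t)" "continuous_on {0..1} (\<lambda>x. ut x t * ut x t)"
     "continuous_on {0..1} (\<lambda>x. u x t * utt x t)"
    by (auto intro!: continuous_intros scs sc_R t)
  have "integral {0..1} (\<lambda>x. u x t * utt x t) = integral {0..1} (\<lambda>x. 1 * (u x t * F (u x t)) + eps * (u x t * uxxt x t) + 1 * (u x t * uxx x t) + (-1) * (u x t * R x t))"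
    by (rule integral_cong) (simp add: R_def algebra_simps)
  also have "\<dots> = integral {0..1} (\<lambda>x. u x t * F (u x t)) + eps * integral {0..1} (\<lambda>x. u x t * uxxt x t)
      + integral {0..1} (\<lambda>x. u x t * uxx x t) - integral {0..1} (\<lambda>x. u x t * R x t)"
    using int_lin4[OF c(1-4), of 1 eps 1 "-1"] by simp
  finally have e1: "integral {0..1} (\<lambda>x. u x t * utt x t) = \<dots>" .
  have "integral {0..1} (\<lambda>x. ut x t * uxx x t + u x t * uxxt x t) = 1 * integral {0..1} (\<lambda>x. ut x t * uxx x t) + 1 * integral {0..1} (\<lambda>x. u x t * uxxt x t)"
    using int_lin2[OF c(5) c(2), of 1 1] by simp
  then have e2: "integral {0..1} (\<lambda>x. ut x t * uxx x t + u x t * uxxt x t) = 2 * integral {0..1} (\<lambda>x. u x t * uxxt x t)"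
    using S3[OF t] by simp
  have "integral {0..1} (\<lambda>x. ut x t * ut x t + u x t * utt x t) = 1 * integral {0..1} (\<lambda>x. ut x t * ut x t) + 1 * integral {0..1} (\<lambda>x. u x t * utt x t)"
    using int_lin2[OF c(6) c(7), of 1 1] by simp
  then have e3: "integral {0..1} (\<lambda>x. ut x t * ut x t + u x t * utt x t) = V2 t + integral {0..1} (\<lambda>x. u x t * utt x t)"
    unfolding V2_def by (simp add: power2_eq_square)
  show ?thesis unfolding Jd_def e2 e3 e1 Qm_def by (simp add: algebra_simps)
qed

lemma Yd_eq: "Yd t = 2 * integral {0..1} (\<lambda>x. (eps * uxx x t - ut x t) * R x t)
   - 2 * integral {0..1} (\<lambda>x. (eps * uxx x t - ut x t) * F (u x t))
   - 2 / eps * Y t - 2 / eps * integral {0..1} (\<lambda>x. (eps * uxx x t - ut x t) * ut x t)"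
proof -
  have c: "continuous_on {0..1} (\<lambda>x. (eps * uxx x t - ut x t) * R x t)"
     "continuous_on {0..1} (\<lambda>x. (eps * uxx x t - ut x t) * F (u x t))"
     "continuous_on {0..1} (\<lambda>x. (eps * uxx x t - ut x t)\<^sup>2)"
     "continuous_on {0..1} (\<lambda>x. (eps * uxx x t - ut x t) * ut x t)"
    by (auto intro!: continuous_intros scs sc_R t)
  have "Yd t = integral {0..1} (\<lambda>x. 2 * ((eps * uxx x t - ut x t) * R x t) + (-2) * ((eps * uxx x t - ut x t) * F (u x t))
      + (- 2 / eps) * (eps * uxx x t - ut x t)\<^sup>2 + (- 2 / eps) * ((eps * uxx x t - ut x t) * ut x t))"
    unfolding Yd_def using eps_pos
    by (intro integral_cong) (simp add: R_def field_simps power2_eq_square)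
  also have "\<dots> = 2 * integral {0..1} (\<lambda>x. (eps * uxx x t - ut x t) * R x t)
      + (-2) * integral {0..1} (\<lambda>x. (eps * uxx x t - ut x t) * F (u x t))
      + (- 2 / eps) * Y t + (- 2 / eps) * integral {0..1} (\<lambda>x. (eps * uxx x t - ut x t) * ut x t)"
    unfolding Y_def by (rule int_lin4[OF c])
  finally show ?thesis by simp
qed

end

end

lemma closure_01: "closure {0<..<1::real} = {0..1}" by simp

lemma ext01:
  fixes f g :: "real \<Rightarrow> real"
  assumes "continuous_on {0..1} f" "continuous_on {0..1} g" "\<forall>x\<in>{0<..<1}. f x \<le> g x" "x \<in> {0..1}"
  shows "f x \<le> g x"
proof -
  have "continuous_on (closure {0<..<1}) (\<lambda>x. g x - f x)" using assms by (auto intro!: continuous_intros)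
  then have "g x - f x \<ge> 0"
    by (rule continuous_ge_on_closure) (use assms in auto)
  then show ?thesis by simp
qed

lemma alg_R:
  fixes aa a0 M w :: real
  assumes "a0 \<le> aa" "aa \<le> M" "M \<ge> 0"
  shows "(aa * w)\<^sup>2 \<le> (M + \<bar>a0\<bar>) * (aa * w * w - a0 * w\<^sup>2 + \<bar>a0\<bar> * w\<^sup>2)"
proof -
  have h1: "\<bar>aa\<bar> \<le> M + \<bar>a0\<bar>" using assms by auto
  have h2: "\<bar>aa\<bar> \<le> aa - a0 + \<bar>a0\<bar>" using assms by auto
  have "\<bar>aa\<bar> * \<bar>aa\<bar> \<le> (M + \<bar>a0\<bar>) * (aa - a0 + \<bar>a0\<bar>)"
    by (rule mult_mono[OF h1 h2]) (use assms in auto)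
  then have "aa\<^sup>2 * w\<^sup>2 \<le> (M + \<bar>a0\<bar>) * (aa - a0 + \<bar>a0\<bar>) * w\<^sup>2"
    by (intro mult_right_mono) (auto simp: power2_eq_square abs_mult_self_eq)
  then show ?thesis by (simp add: power2_eq_square algebra_simps)
qed

context sol begin

definition "nu = eps * pi\<^sup>2 + a0"
definition "kap = min eps (nu / pi\<^sup>2)"

lemma nu_pos': "nu > 0" using nu_pos unfolding nu_def a0_def by simp
lemma kap_pos: "kap > 0" unfolding kap_def using eps_pos nu_pos' by simp

lemma a_ge: "x \<in> {0<..<1} \<Longrightarrow> t \<ge> 0 \<Longrightarrow> a0 \<le> a x t p q r s"
  unfolding a0_def by (rule cInf_lower[OF _ a_bdd_below]) (rule image_eqI[where x="(x, t, p, q, r, s)"], auto)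

lemma rpow_nn: "d \<ge> 0 \<Longrightarrow> rpow d e \<ge> 0" unfolding rpow_def by auto

lemma Mt_nn: "Mt t \<ge> 0" unfolding Mt_def using A_pos A'_nonneg
  by (metis dG_def dd_def real_sqrt_ge_zero rpow_def powr_ge_zero zero_le_one add_nonneg_nonneg mult_nonneg_nonneg less_imp_le)

lemma a_le: assumes x: "x \<in> {0<..<1}" and t: "t \<ge> t0"
  shows "a x t (u x t) (ux x t) (uxx x t) (ut x t) \<le> Mt t"
proof -
  have g: "in_Gamma (\<lambda>x. u x t) (\<lambda>x. ux x t) (\<lambda>x. uxx x t) (\<lambda>x. ut x t)"
    unfolding in_Gamma_def using u_d1[OF t] u_d2[OF t] sc_uxx[OF t] sc_ut[OF t] u_bc[OF t] ut_bc[OF t] by auto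
  have "0 \<le> t" using t t0 by simp
  from a_growth[rule_format, OF g x this] show ?thesis unfolding Mt_def dd_def .
qed

lemma R_eq: "x \<in> {0<..<1} \<Longrightarrow> t > t0 \<Longrightarrow> R x t = a x t (u x t) (ux x t) (uxx x t) (ut x t) * ut x t"
  using pde unfolding R_def by (auto simp: algebra_simps)

context fixes t assumes t: "t > t0"
begin

lemma R_ineq1: "x \<in> {0..1} \<Longrightarrow> a0 * (ut x t)\<^sup>2 \<le> R x t * ut x t"
proof (rule ext01[where f="\<lambda>x. a0 * (ut x t)\<^sup>2" and g="\<lambda>x. R x t * ut x t"])
  show "continuous_on {0..1} (\<lambda>x. a0 * (ut x t)\<^sup>2)" "continuous_on {0..1} (\<lambda>x. R x t * ut x t)"
    using t by (auto intro!: continuous_intros scs sc_R)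
  show "\<forall>x\<in>{0<..<1}. a0 * (ut x t)\<^sup>2 \<le> R x t * ut x t"
  proof
    fix x :: real assume x: "x \<in> {0<..<1}"
    have "a0 \<le> a x t (u x t) (ux x t) (uxx x t) (ut x t)" using a_ge[OF x] t t0 by auto
    then have "a0 * (ut x t)\<^sup>2 \<le> a x t (u x t) (ux x t) (uxx x t) (ut x t) * (ut x t)\<^sup>2"
      by (rule mult_right_mono) simp
    then show "a0 * (ut x t)\<^sup>2 \<le> R x t * ut x t" using R_eq[OF x t] by (simp add: power2_eq_square mult.assoc)
  qed
qed

lemma R_ineq2: "x \<in> {0..1} \<Longrightarrow> (R x t)\<^sup>2 \<le> (Mt t + \<bar>a0\<bar>) * (R x t * ut x t - a0 * (ut x t)\<^sup>2 + \<bar>a0\<bar> * (ut x t)\<^sup>2)"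
proof (rule ext01[where f="\<lambda>x. (R x t)\<^sup>2"])
  show "continuous_on {0..1} (\<lambda>x. (R x t)\<^sup>2)"
    "continuous_on {0..1} (\<lambda>x. (Mt t + \<bar>a0\<bar>) * (R x t * ut x t - a0 * (ut x t)\<^sup>2 + \<bar>a0\<bar> * (ut x t)\<^sup>2))"
    using t by (auto intro!: continuous_intros scs sc_R)
  show "\<forall>x\<in>{0<..<1}. (R x t)\<^sup>2 \<le> (Mt t + \<bar>a0\<bar>) * (R x t * ut x t - a0 * (ut x t)\<^sup>2 + \<bar>a0\<bar> * (ut x t)\<^sup>2)"
  proof
    fix x :: real assume x: "x \<in> {0<..<1}"
    have "a0 \<le> a x t (u x t) (ux x t) (uxx x t) (ut x t)" using a_ge[OF x] t t0 by auto
    moreover have "a x t (u x t) (ux x t) (uxx x t) (ut x t) \<le> Mt t" using a_le[OF x] t by auto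
    ultimately show "(R x t)\<^sup>2 \<le> (Mt t + \<bar>a0\<bar>) * (R x t * ut x t - a0 * (ut x t)\<^sup>2 + \<bar>a0\<bar> * (ut x t)\<^sup>2)"
      using R_eq[OF x t] alg_R[OF _ _ Mt_nn] by simp
  qed
qed

lemma H_nn: "H t \<ge> 0"
proof -
  have "0 \<le> integral {0..1} (\<lambda>x. R x t * ut x t - a0 * (ut x t)\<^sup>2)"
    using R_ineq1 t by (intro integral_nonneg) (auto intro!: ii continuous_intros scs sc_R)
  also have "\<dots> = integral {0..1} (\<lambda>x. 1 * (R x t * ut x t) + (- a0) * (ut x t)\<^sup>2)" by simp
  also have "\<dots> = H t" unfolding H_def V2_def
    by (subst int_lin2) (use t in \<open>auto intro!: continuous_intros scs sc_R\<close>)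
  finally show ?thesis .
qed

lemma Rn_bound: "Rn t \<le> (Mt t + \<bar>a0\<bar>) * (H t + \<bar>a0\<bar> * V2 t)"
proof -
  have "Rn t \<le> integral {0..1} (\<lambda>x. (Mt t + \<bar>a0\<bar>) * (R x t * ut x t - a0 * (ut x t)\<^sup>2 + \<bar>a0\<bar> * (ut x t)\<^sup>2))"
    unfolding Rn_def using R_ineq2 t by (intro integral_le) (auto intro!: ii continuous_intros scs sc_R)
  also have "\<dots> = integral {0..1} (\<lambda>x. (Mt t + \<bar>a0\<bar>) * (R x t * ut x t) + ((Mt t + \<bar>a0\<bar>) * (\<bar>a0\<bar> - a0)) * (ut x t)\<^sup>2)"
    by (rule integral_cong) algebra
  also have "\<dots> = (Mt t + \<bar>a0\<bar>) * integral {0..1} (\<lambda>x. R x t * ut x t) + ((Mt t + \<bar>a0\<bar>) * (\<bar>a0\<bar> - a0)) * V2 t"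
    unfolding V2_def by (subst int_lin2) (use t in \<open>auto intro!: continuous_intros scs sc_R\<close>)
  also have "\<dots> = (Mt t + \<bar>a0\<bar>) * (H t + \<bar>a0\<bar> * V2 t)" unfolding H_def by (simp add: algebra_simps)
  finally show ?thesis .
qed

lemma E1d_le: "E1d t \<le> - kap * D1 t - H t"
proof -
  have tt: "t \<ge> t0" using t by simp
  have e: "E1d t = - eps * D1 t - H t - a0 * V2 t" using E1d_eq[OF tt] unfolding H_def by simp
  have w: "pi\<^sup>2 * V2 t \<le> D1 t" by (rule wirt_ut[OF tt])
  have D0: "D1 t \<ge> 0" "V2 t \<ge> 0" using nonnegs[OF tt] by auto
  have "- eps * D1 t - a0 * V2 t \<le> - kap * D1 t"
  proof (cases "a0 \<ge> 0")
    case True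
    have "kap \<le> eps" unfolding kap_def by simp
    then have "kap * D1 t \<le> eps * D1 t" by (rule mult_right_mono[OF _ D0(1)])
    moreover have "a0 * V2 t \<ge> 0" using True D0 by simp
    ultimately show ?thesis by simp
  next
    case False
    have "(- a0) * (pi\<^sup>2 * V2 t) \<le> (- a0) * D1 t" using False w by (intro mult_left_mono) auto
    then have "- a0 * V2 t \<le> (- a0 / pi\<^sup>2) * D1 t" by (simp add: field_simps)
    moreover have "kap \<le> nu / pi\<^sup>2" unfolding kap_def by simp
    then have "kap * D1 t \<le> nu / pi\<^sup>2 * D1 t" by (rule mult_right_mono[OF _ D0(1)])
    moreover have "nu / pi\<^sup>2 * D1 t = eps * D1 t + a0 / pi\<^sup>2 * D1 t" unfolding nu_def by (simp add: field_simps)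
    ultimately show ?thesis by simp
  qed
  then show ?thesis using e by simp
qed

end

end

context sol begin

definition "kk = 1 - K / pi\<^sup>2"

lemma kk_pos: "kk > 1/4" and kk_le: "kk \<le> 1"
proof -
  have "K / pi\<^sup>2 < 3/4" using K_less by (simp add: field_simps)
  then show "kk > 1/4" unfolding kk_def by simp
  show "kk \<le> 1" unfolding kk_def using K_pos by simp
qed

context fixes t assumes t: "t \<ge> t0"
begin

lemma uF_le: "integral {0..1} (\<lambda>x. u x t * F (u x t)) \<le> K * nu2 t"
proof -
  have "integral {0..1} (\<lambda>x. u x t * F (u x t)) \<le> integral {0..1} (\<lambda>x. K * (u x t)\<^sup>2)"
    using F_sign[OF F_deriv F'_le F0] t by (intro integral_le) (auto intro!: ii continuous_intros scs)
  then show ?thesis unfolding nu2_def by simp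
qed

lemma nu2_le: "K * nu2 t \<le> (1 - kk) * Qf t"
proof -
  have "pi\<^sup>2 * nu2 t \<le> Qf t" by (rule wirt_u[OF t])
  then have "K * (pi\<^sup>2 * nu2 t) \<le> K * Qf t" using K_pos by (intro mult_left_mono) auto
  then show ?thesis unfolding kk_def by (simp add: field_simps)
qed

lemma Jd_le: "Jd t \<le> V2 t - kk * Qf t + sqrt (nu2 t) * sqrt (Rn t)"
proof -
  have "- integral {0..1} (\<lambda>x. u x t * R x t) \<le> sqrt (nu2 t) * sqrt (Rn t)"
    using cs_sqrt[OF sc_u[OF t] sc_R[OF t]] unfolding nu2_def Rn_def by (simp add: abs_le_iff)
  then show ?thesis using Jd_eq[OF t] uF_le nu2_le Qm_eq[OF t] by (simp add: algebra_simps)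
qed

lemma E1_lower: "E1 t \<ge> V2 t / 2 + kk / 2 * Qf t"
proof -
  have "Gi t \<le> integral {0..1} (\<lambda>x. K / 2 * (u x t)\<^sup>2)"
    unfolding Gi_def using G_upper[OF F_deriv F'_le F0 G_deriv G0] t
    by (intro integral_le) (auto intro!: ii continuous_intros scs)
  then have "Gi t \<le> K / 2 * nu2 t" unfolding nu2_def by simp
  then show ?thesis unfolding E1_def using nu2_le Qm_eq[OF t] by (simp add: field_simps)
qed

lemma E1_upper:
  assumes L: "\<forall>x\<in>{0..1}. G (u x t) \<ge> - L * (u x t)\<^sup>2 / 2"
  shows "E1 t \<le> V2 t / 2 + Qf t / 2 + L / 2 * nu2 t"
proof -
  have "integral {0..1} (\<lambda>x. - L / 2 * (u x t)\<^sup>2) \<le> Gi t"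
    unfolding Gi_def using L t by (intro integral_le) (auto intro!: ii continuous_intros scs)
  then have "- L / 2 * nu2 t \<le> Gi t" unfolding nu2_def by simp
  then show ?thesis unfolding E1_def using Qm_eq[OF t] by simp
qed

lemma UU_bound: "\<bar>UU t\<bar> \<le> sqrt (nu2 t) * sqrt (V2 t)"
  using cs_sqrt[OF sc_u[OF t] sc_ut[OF t]] unfolding UU_def nu2_def V2_def by simp

lemma Y_le: "Y t \<le> 2 * eps\<^sup>2 * Wf t + 2 * V2 t"
proof -
  have "Y t \<le> integral {0..1} (\<lambda>x. (2 * eps\<^sup>2) * (uxx x t)\<^sup>2 + 2 * (ut x t)\<^sup>2)"
    unfolding Y_def
  proof (intro integral_le)
    show "(eps * uxx x t - ut x t)\<^sup>2 \<le> (2 * eps\<^sup>2) * (uxx x t)\<^sup>2 + 2 * (ut x t)\<^sup>2" for x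
    proof -
      have "0 \<le> (eps * uxx x t + ut x t)\<^sup>2" by simp
      then show "(eps * uxx x t - ut x t)\<^sup>2 \<le> (2 * eps\<^sup>2) * (uxx x t)\<^sup>2 + 2 * (ut x t)\<^sup>2"
        by (simp add: power2_eq_square algebra_simps)
    qed
  qed (use t in \<open>auto intro!: ii continuous_intros scs\<close>)
  also have "\<dots> = (2 * eps\<^sup>2) * Wf t + 2 * V2 t" unfolding Wf_def V2_def
    by (subst int_lin2) (use t in \<open>auto intro!: continuous_intros scs\<close>)
  finally show ?thesis by simp
qed

lemma Wf_le: "Wf t \<le> 2 * (Y t + V2 t) / eps\<^sup>2"
proof -
  have "eps\<^sup>2 * Wf t = integral {0..1} (\<lambda>x. (eps * uxx x t - ut x t + ut x t)\<^sup>2)"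
    unfolding Wf_def by (simp add: power_mult_distrib)
  also have "\<dots> \<le> integral {0..1} (\<lambda>x. 2 * (eps * uxx x t - ut x t)\<^sup>2 + 2 * (ut x t)\<^sup>2)"
  proof (intro integral_le)
    show "(eps * uxx x t - ut x t + ut x t)\<^sup>2 \<le> 2 * (eps * uxx x t - ut x t)\<^sup>2 + 2 * (ut x t)\<^sup>2" for x
    proof -
      have "0 \<le> (eps * uxx x t - ut x t - ut x t)\<^sup>2" by simp
      then show "(eps * uxx x t - ut x t + ut x t)\<^sup>2 \<le> 2 * (eps * uxx x t - ut x t)\<^sup>2 + 2 * (ut x t)\<^sup>2"
        by (simp add: power2_eq_square algebra_simps)
    qed
  qed (use t in \<open>auto intro!: ii continuous_intros scs\<close>)
  also have "\<dots> = 2 * Y t + 2 * V2 t" unfolding Y_def V2_def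
    by (subst int_lin2) (use t in \<open>auto intro!: continuous_intros scs\<close>)
  finally have "eps\<^sup>2 * Wf t \<le> 2 * (Y t + V2 t)" by simp
  then show ?thesis using eps_pos by (simp add: field_simps)
qed

lemma Yd_le:
  assumes L: "\<forall>x\<in>{0..1}. \<bar>F (u x t)\<bar> \<le> L * \<bar>u x t\<bar>" and L0: "L \<ge> 0"
  shows "Yd t \<le> - 2 / eps * Y t + 2 * sqrt (Y t) * (sqrt (Rn t) + L * sqrt (nu2 t) + sqrt (V2 t) / eps)"
proof -
  have cm: "continuous_on {0..1} (\<lambda>x. eps * uxx x t - ut x t)" using t by (auto intro!: continuous_intros scs)
  have i1: "integral {0..1} (\<lambda>x. (eps * uxx x t - ut x t) * R x t) \<le> sqrt (Y t) * sqrt (Rn t)"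
    using cs_sqrt[OF cm sc_R[OF t]] unfolding Y_def Rn_def by (simp add: abs_le_iff)
  have FF: "integral {0..1} (\<lambda>x. (F (u x t))\<^sup>2) \<le> L\<^sup>2 * nu2 t"
  proof -
    have "integral {0..1} (\<lambda>x. (F (u x t))\<^sup>2) \<le> integral {0..1} (\<lambda>x. L\<^sup>2 * (u x t)\<^sup>2)"
    proof (intro integral_le)
      show "(F (u x t))\<^sup>2 \<le> L\<^sup>2 * (u x t)\<^sup>2" if "x \<in> {0..1}" for x
      proof -
        from that have "\<bar>F (u x t)\<bar> \<le> L * \<bar>u x t\<bar>" using L by auto
        then have "\<bar>F (u x t)\<bar>\<^sup>2 \<le> (L * \<bar>u x t\<bar>)\<^sup>2" by (rule power_mono) simp
        then show "(F (u x t))\<^sup>2 \<le> L\<^sup>2 * (u x t)\<^sup>2" by (simp add: power_mult_distrib)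
      qed
    qed (use t in \<open>auto intro!: ii continuous_intros scs\<close>)
    then show ?thesis unfolding nu2_def by simp
  qed
  have i2: "- integral {0..1} (\<lambda>x. (eps * uxx x t - ut x t) * F (u x t)) \<le> sqrt (Y t) * (L * sqrt (nu2 t))"
  proof -
    have "- integral {0..1} (\<lambda>x. (eps * uxx x t - ut x t) * F (u x t)) \<le> sqrt (Y t) * sqrt (integral {0..1} (\<lambda>x. (F (u x t))\<^sup>2))"
      using cs_sqrt[OF cm sc_Fu[OF t]] unfolding Y_def by (simp add: abs_le_iff)
    also have "\<dots> \<le> sqrt (Y t) * (L * sqrt (nu2 t))"
    proof (rule mult_left_mono)
      have "sqrt (integral {0..1} (\<lambda>x. (F (u x t))\<^sup>2)) \<le> sqrt (L\<^sup>2 * nu2 t)" using FF by simp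
      also have "\<dots> = L * sqrt (nu2 t)" using L0 by (simp add: real_sqrt_mult)
      finally show "sqrt (integral {0..1} (\<lambda>x. (F (u x t))\<^sup>2)) \<le> L * sqrt (nu2 t)" .
    qed (use nonnegs[OF t] in simp)
    finally show ?thesis .
  qed
  have i3: "- integral {0..1} (\<lambda>x. (eps * uxx x t - ut x t) * ut x t) \<le> sqrt (Y t) * sqrt (V2 t)"
    using cs_sqrt[OF cm sc_ut[OF t]] unfolding Y_def V2_def by (simp add: abs_le_iff)
  have "Yd t = 2 * integral {0..1} (\<lambda>x. (eps * uxx x t - ut x t) * R x t)
   + 2 * (- integral {0..1} (\<lambda>x. (eps * uxx x t - ut x t) * F (u x t)))
   - 2 / eps * Y t + 2 / eps * (- integral {0..1} (\<lambda>x. (eps * uxx x t - ut x t) * ut x t))"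
    using Yd_eq[OF t] by simp
  also have "\<dots> \<le> 2 * (sqrt (Y t) * sqrt (Rn t)) + 2 * (sqrt (Y t) * (L * sqrt (nu2 t))) - 2 / eps * Y t
      + 2 / eps * (sqrt (Y t) * sqrt (V2 t))"
    using i1 i2 i3 eps_pos by (intro add_mono diff_mono mult_left_mono) auto
  also have "\<dots> = - 2 / eps * Y t + 2 * sqrt (Y t) * (sqrt (Rn t) + L * sqrt (nu2 t) + sqrt (V2 t) / eps)"
    by (simp add: algebra_simps)
  finally show ?thesis .
qed

end

end

context sol begin

definition "e0 al = (1 + LFb F' al) / 2"
definition "B1 al = 2 * e0 al * al\<^sup>2 / kk"
definition "Mu al = sqrt (B1 al)"
definition "L2 al = LFb F' (Mu al)"
definition "Cd al = 3 * B1 al + 2 * B1 al / eps\<^sup>2 + 2 / eps\<^sup>2 + 1"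
definition "Cm al = A * Cd al powr (tau / 2) + A' + \<bar>a0\<bar>"
definition "bet = 1/2 + tau / 4"
definition "C6 al = 2 * sqrt (B1 al) * (1 / eps + L2 al)"
definition "C8 al = C6 al + Cm al + \<bar>a0\<bar> * B1 al"
definition "Bth al = e0 al * al\<^sup>2 + 1 + eps * C8 al / 2"
definition "Zb al = max (1 + 2 * (eps\<^sup>2 + 1) * al\<^sup>2 + e0 al * al\<^sup>2) (Bth al)"
definition "Yb1 al = Zb al powr (1 / (1 - bet))"
definition "Cr al = Cm al * Yb1 al powr (tau / 2)"

lemma bet: "1/2 \<le> bet" "bet < 1" unfolding bet_def using tau by auto

lemma E1_decr: "t \<ge> t0 \<Longrightarrow> E1 t \<le> E1 t0"
proof -
  assume t: "t \<ge> t0"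
  have "E1 t \<le> exp (- 0 * (t - t0)) * E1 t0"
  proof (rule exp_decay[where g' = E1d])
    show "\<forall>t\<in>{t0..}. (E1 has_real_derivative E1d t) (at t within {t0..})" using dE1 by auto
    show "\<forall>t>t0. E1d t \<le> - 0 * E1 t"
    proof (intro allI impI)
      fix s assume s: "s > t0"
      have "E1d s \<le> - kap * D1 s - H s" by (rule E1d_le[OF s])
      moreover have "kap * D1 s \<ge> 0" using kap_pos nonnegs(5)[of s] s by simp
      moreover have "H s \<ge> 0" by (rule H_nn[OF s])
      ultimately show "E1d s \<le> - 0 * E1 s" by simp
    qed
  qed (rule t)
  then show ?thesis by simp
qed

lemma E1_nn: "t \<ge> t0 \<Longrightarrow> E1 t \<ge> 0"
proof -
  assume t: "t \<ge> t0"
  have "kk / 2 * Qf t \<ge> 0" using kk_pos nonnegs[OF t] by (intro mult_nonneg_nonneg) auto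
  then show ?thesis using E1_lower[OF t] nonnegs[OF t] by linarith
qed

context fixes al assumes al: "al > 0" and d0: "dd t0 \<le> al"
begin

lemma LF1: "\<forall>r. \<bar>r\<bar> \<le> al \<longrightarrow> \<bar>F' r\<bar> \<le> LFb F' al" "LFb F' al \<ge> 0"
  using LFb_props[OF F'_cont] al by auto

lemma e0_ge: "e0 al \<ge> 1/2" "e0 al \<ge> LFb F' al / 2" unfolding e0_def using LF1 by auto

lemma E1_t0: "E1 t0 \<le> e0 al * al\<^sup>2"
proof -
  have tt: "t0 \<ge> t0" by simp
  have ub: "\<bar>u x t0\<bar> \<le> al" if x: "x \<in> {0..1}" for x
  proof -
    have "(u x t0)\<^sup>2 \<le> Qf t0" by (rule supb[OF tt x])
    also have "\<dots> \<le> (dd t0)\<^sup>2" using dd_sq[OF tt] nonnegs[OF tt] by simp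
    also have "\<dots> \<le> al\<^sup>2" using d0 dd_nn[OF tt] by (simp add: power_mono)
    finally have "\<bar>u x t0\<bar>\<^sup>2 \<le> al\<^sup>2" by simp
    then show ?thesis by (rule power2_le_imp_le) (use al in auto)
  qed
  have "E1 t0 \<le> V2 t0 / 2 + Qf t0 / 2 + LFb F' al / 2 * nu2 t0"
    by (rule E1_upper[OF tt]) (use G_lower[OF F_deriv F0 LF1(1) G_deriv G0] ub in auto)
  also have "\<dots> \<le> e0 al * (nu2 t0 + Qf t0 + Wf t0 + V2 t0)"
  proof -
    have "V2 t0 / 2 \<le> e0 al * V2 t0" using mult_right_mono[OF e0_ge(1) nonnegs(4)[OF tt]] by simp
    moreover have "Qf t0 / 2 \<le> e0 al * Qf t0" using mult_right_mono[OF e0_ge(1) nonnegs(2)[OF tt]] by simp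
    moreover have "LFb F' al / 2 * nu2 t0 \<le> e0 al * nu2 t0" using mult_right_mono[OF e0_ge(2) nonnegs(1)[OF tt]] by simp
    moreover have "0 \<le> e0 al * Wf t0" using e0_ge nonnegs[OF tt] by simp
    ultimately show ?thesis by (simp add: algebra_simps)
  qed
  also have "\<dots> = e0 al * (dd t0)\<^sup>2" using dd_sq[OF tt] by simp
  also have "\<dots> \<le> e0 al * al\<^sup>2" using d0 dd_nn[OF tt] e0_ge
    by (intro mult_left_mono power_mono) auto
  finally show ?thesis .
qed

lemma B1_ge: "B1 al \<ge> 2 * e0 al * al\<^sup>2" "B1 al \<ge> 0"
proof -
  have "2 * e0 al * al\<^sup>2 \<ge> 0" using e0_ge by simp
  moreover have "2 * e0 al * al\<^sup>2 * kk \<le> 2 * e0 al * al\<^sup>2" using kk_pos kk_le \<open>2 * e0 al * al\<^sup>2 \<ge> 0\<close>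
    by (intro mult_left_le) auto
  ultimately show "B1 al \<ge> 2 * e0 al * al\<^sup>2" unfolding B1_def using kk_pos by (simp add: le_divide_eq)
  then show "B1 al \<ge> 0" using \<open>2 * e0 al * al\<^sup>2 \<ge> 0\<close> by linarith
qed

context fixes t assumes t: "t \<ge> t0"
begin

lemma E1_le: "E1 t \<le> e0 al * al\<^sup>2" using E1_decr[OF t] E1_t0 by simp

lemma Qf_le: "Qf t \<le> B1 al"
proof -
  have "kk / 2 * Qf t \<le> e0 al * al\<^sup>2" using E1_lower[OF t] E1_le nonnegs[OF t] by simp
  then show ?thesis unfolding B1_def using kk_pos by (simp add: field_simps)
qed

lemma V2_le: "V2 t \<le> B1 al"
proof -
  have "kk / 2 * Qf t \<ge> 0" using kk_pos nonnegs[OF t] by (intro mult_nonneg_nonneg) auto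
  then have "V2 t / 2 \<le> e0 al * al\<^sup>2" using E1_lower[OF t] E1_le by linarith
  then show ?thesis using B1_ge by simp
qed

lemma nu2_le_B1: "nu2 t \<le> B1 al"
proof -
  have "pi\<^sup>2 * nu2 t \<le> Qf t" by (rule wirt_u[OF t])
  moreover have "nu2 t \<le> pi\<^sup>2 * nu2 t"
  proof -
    have "(1::real) \<le> pi\<^sup>2" using pi_gt3 by (intro one_le_power) simp
    then have "1 * nu2 t \<le> pi\<^sup>2 * nu2 t" using nonnegs[OF t] by (intro mult_right_mono) auto
    then show ?thesis by simp
  qed
  ultimately show ?thesis using Qf_le by simp
qed

lemma u_le: "x \<in> {0..1} \<Longrightarrow> \<bar>u x t\<bar> \<le> Mu al"
proof -
  assume x: "x \<in> {0..1}"
  have "(u x t)\<^sup>2 \<le> B1 al" using supb[OF t x] Qf_le by simp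
  then have "\<bar>u x t\<bar>\<^sup>2 \<le> (sqrt (B1 al))\<^sup>2" using B1_ge by simp
  then show ?thesis unfolding Mu_def by (rule power2_le_imp_le) (use B1_ge in auto)
qed

lemma L2_props: "\<forall>r. \<bar>r\<bar> \<le> Mu al \<longrightarrow> \<bar>F' r\<bar> \<le> L2 al" "L2 al \<ge> 0"
  using LFb_props[OF F'_cont, of "Mu al"] B1_ge unfolding L2_def Mu_def by auto

lemma F_le: "\<forall>x\<in>{0..1}. \<bar>F (u x t)\<bar> \<le> L2 al * \<bar>u x t\<bar>"
  using F_lip[OF F_deriv F0 L2_props(1)] u_le by auto

lemma G_ge: "\<forall>x\<in>{0..1}. G (u x t) \<ge> - L2 al * (u x t)\<^sup>2 / 2"
  using G_lower[OF F_deriv F0 L2_props(1) G_deriv G0] u_le by auto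

lemma dd_le: "(dd t)\<^sup>2 \<le> Cd al * (1 + Y t)"
proof -
  have "(dd t)\<^sup>2 = nu2 t + Qf t + Wf t + V2 t" by (rule dd_sq[OF t])
  also have "\<dots> \<le> B1 al + B1 al + 2 * (Y t + B1 al) / eps\<^sup>2 + B1 al"
  proof -
    have "2 * (Y t + V2 t) / eps\<^sup>2 \<le> 2 * (Y t + B1 al) / eps\<^sup>2" using V2_le by (intro divide_right_mono) auto
    then show ?thesis using nu2_le_B1 Qf_le V2_le Wf_le[OF t] by linarith
  qed
  also have "\<dots> \<le> Cd al * (1 + Y t)"
  proof -
    have "B1 al + B1 al + 2 * (Y t + B1 al) / eps\<^sup>2 + B1 al = (3 * B1 al + 2 * B1 al / eps\<^sup>2) + (2 / eps\<^sup>2) * Y t"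
      by (simp add: add_divide_distrib algebra_simps)
    also have "\<dots> \<le> (3 * B1 al + 2 * B1 al / eps\<^sup>2 + 2 / eps\<^sup>2 + 1) * 1 + (3 * B1 al + 2 * B1 al / eps\<^sup>2 + 2 / eps\<^sup>2 + 1) * Y t"
    proof (rule add_mono)
      have "0 \<le> 2 / eps\<^sup>2" by simp
      then show "3 * B1 al + 2 * B1 al / eps\<^sup>2 \<le> (3 * B1 al + 2 * B1 al / eps\<^sup>2 + 2 / eps\<^sup>2 + 1) * 1" by simp
      have "0 \<le> 3 * B1 al + 2 * B1 al / eps\<^sup>2" using B1_ge by simp
      then show "2 / eps\<^sup>2 * Y t \<le> (3 * B1 al + 2 * B1 al / eps\<^sup>2 + 2 / eps\<^sup>2 + 1) * Y t"
        using nonnegs(6)[OF t] by (intro mult_right_mono) auto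
    qed
    also have "\<dots> = Cd al * (1 + Y t)" unfolding Cd_def by (simp only: distrib_left mult_1_right)
    finally show ?thesis .
  qed
  finally show ?thesis .
qed

end

end

end

context sol begin

lemma Cd_pos: "B1 al \<ge> 0 \<Longrightarrow> Cd al \<ge> 1" unfolding Cd_def by simp

context fixes al assumes al: "al > 0" and d0: "dd t0 \<le> al"
begin

lemma Cm_nn: "Cm al \<ge> 0"
  unfolding Cm_def using A_pos A'_nonneg by simp

lemma Mt_bound1: assumes t: "t \<ge> t0"
  shows "Mt t + \<bar>a0\<bar> \<le> Cm al * (1 + Y t) powr (tau / 2)"
proof -
  have Y0: "Y t \<ge> 0" using nonnegs[OF t] by simp
  define P where "P = (1 + Y t) powr (tau / 2)"
  have P1: "P \<ge> 1" unfolding P_def using Y0 tau by (intro ge_one_powr_ge_zero) auto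
  have Cd1: "Cd al \<ge> 1" using Cd_pos B1_ge[OF al d0] by simp
  have r: "rpow (dd t) tau \<le> Cd al powr (tau / 2) * P"
  proof (cases "tau = 0")
    case True then show ?thesis unfolding rpow_def P_def using Cd1 Y0 by simp
  next
    case False
    have ddn: "dd t \<ge> 0" by (rule dd_nn[OF t])
    have "rpow (dd t) tau = dd t powr tau" unfolding rpow_def using False by simp
    also have "\<dots> = ((dd t)\<^sup>2) powr (tau / 2)"
    proof -
      have e1: "((dd t)\<^sup>2) powr (1/2) = dd t" using ddn by (simp add: powr_half_sqrt)
      have "dd t powr tau = (((dd t)\<^sup>2) powr (1/2)) powr tau" using e1 by simp
      also have "\<dots> = ((dd t)\<^sup>2) powr (1/2 * tau)" by (rule powr_powr)
      finally show ?thesis by simp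
    qed
    also have "\<dots> \<le> (Cd al * (1 + Y t)) powr (tau / 2)"
      using dd_le[OF al d0 t] tau by (intro powr_mono2) auto
    also have "\<dots> = Cd al powr (tau / 2) * P" unfolding P_def using Cd1 Y0 by (simp add: powr_mult)
    finally show ?thesis .
  qed
  have "Mt t + \<bar>a0\<bar> = A * rpow (dd t) tau + A' + \<bar>a0\<bar>" unfolding Mt_def by simp
  also have "\<dots> \<le> A * (Cd al powr (tau / 2) * P) + A' * P + \<bar>a0\<bar> * P"
    using r A_pos A'_nonneg P1 by (intro add_mono mult_left_mono) (auto simp: mult_le_cancel_left1)
  also have "\<dots> = Cm al * P" unfolding Cm_def by (simp add: algebra_simps)
  finally show ?thesis unfolding P_def .
qed

lemma amgm: "x \<ge> 0 \<Longrightarrow> y \<ge> 0 \<Longrightarrow> 2 * sqrt (x * y) \<le> x + y" for x y :: real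
proof -
  assume "x \<ge> 0" "y \<ge> 0"
  have "0 \<le> (sqrt x - sqrt y)\<^sup>2" by simp
  then show ?thesis using \<open>x \<ge> 0\<close> \<open>y \<ge> 0\<close> by (simp add: power2_eq_square algebra_simps real_sqrt_mult)
qed

lemma Yd_bound: assumes t: "t > t0"
  shows "Yd t \<le> - 2 / eps * Y t + (1 + Y t) powr bet * (C8 al + H t)"
proof -
  have tt: "t \<ge> t0" using t by simp
  note nn = nonnegs[OF tt]
  define p where "p = 1 + Y t"
  have p1: "p \<ge> 1" unfolding p_def using nn by simp
  define X where "X = H t + \<bar>a0\<bar> * B1 al"
  have X0: "X \<ge> 0" unfolding X_def using H_nn[OF t] B1_ge[OF al d0] by simp
  have Rn_le: "Rn t \<le> (Cm al * X) * p powr (tau / 2)"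
  proof -
    have "Rn t \<le> (Mt t + \<bar>a0\<bar>) * (H t + \<bar>a0\<bar> * V2 t)" by (rule Rn_bound[OF t])
    also have "\<dots> \<le> (Cm al * p powr (tau / 2)) * X"
    proof (rule mult_mono)
      show "Mt t + \<bar>a0\<bar> \<le> Cm al * p powr (tau / 2)" unfolding p_def by (rule Mt_bound1[OF tt])
      have "\<bar>a0\<bar> * V2 t \<le> \<bar>a0\<bar> * B1 al" using V2_le[OF al d0 tt] by (simp add: mult_left_mono)
      then show "H t + \<bar>a0\<bar> * V2 t \<le> X" unfolding X_def by simp
      show "0 \<le> Cm al * p powr (tau / 2)" using Cm_nn by simp
      show "0 \<le> H t + \<bar>a0\<bar> * V2 t" using H_nn[OF t] nn by simp
    qed
    finally show ?thesis by (simp add: algebra_simps)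
  qed
  have sR: "sqrt (Rn t) \<le> sqrt (Cm al * X) * p powr (tau / 4)"
  proof -
    have "sqrt (Rn t) \<le> sqrt ((Cm al * X) * p powr (tau / 2))" using Rn_le by simp
    also have "\<dots> = sqrt (Cm al * X) * sqrt (p powr (tau / 2))" by (simp add: real_sqrt_mult)
    also have "sqrt (p powr (tau / 2)) = p powr (tau / 4)"
      using p1 by (simp add: powr_half_sqrt_powr[symmetric] powr_powr)
    finally show ?thesis .
  qed
  have sY: "sqrt (Y t) \<le> p powr (1/2)" unfolding p_def using nn by (simp add: powr_half_sqrt)
  have o: "L2 al * sqrt (nu2 t) + sqrt (V2 t) / eps \<le> C6 al / 2"
  proof -
    have "sqrt (nu2 t) \<le> sqrt (B1 al)" using nu2_le_B1[OF al d0 tt] by simp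
    then have "L2 al * sqrt (nu2 t) \<le> L2 al * sqrt (B1 al)" using L2_props[OF al d0 tt] by (simp add: mult_left_mono)
    moreover have "sqrt (V2 t) / eps \<le> sqrt (B1 al) / eps" using V2_le[OF al d0 tt] eps_pos by (simp add: divide_right_mono)
    ultimately show ?thesis unfolding C6_def by (simp add: algebra_simps add_divide_distrib)
  qed
  have pb: "p powr (1/2) \<le> p powr bet" using p1 bet by (intro powr_mono) auto
  have pb2: "p powr (1/2) * p powr (tau / 4) = p powr bet" unfolding bet_def by (simp add: powr_add[symmetric])
  have C6n: "C6 al \<ge> 0" unfolding C6_def using L2_props[OF al d0 tt] eps_pos B1_ge[OF al d0] by simp
  have "Yd t \<le> - 2 / eps * Y t + 2 * sqrt (Y t) * (sqrt (Rn t) + L2 al * sqrt (nu2 t) + sqrt (V2 t) / eps)"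
    by (rule Yd_le[OF tt F_le[OF al d0 tt] L2_props(2)[OF al d0 tt]])
  also have "2 * sqrt (Y t) * (sqrt (Rn t) + L2 al * sqrt (nu2 t) + sqrt (V2 t) / eps)
      \<le> 2 * p powr (1/2) * (sqrt (Cm al * X) * p powr (tau / 4) + C6 al / 2)"
  proof -
    have s1: "sqrt (Rn t) + L2 al * sqrt (nu2 t) + sqrt (V2 t) / eps \<le> sqrt (Cm al * X) * p powr (tau / 4) + C6 al / 2"
      using sR o by linarith
    have s0: "0 \<le> sqrt (Rn t) + L2 al * sqrt (nu2 t) + sqrt (V2 t) / eps"
      using L2_props(2)[OF al d0 tt] eps_pos nn by simp
    have "sqrt (Y t) * (sqrt (Rn t) + L2 al * sqrt (nu2 t) + sqrt (V2 t) / eps) \<le> p powr (1/2) * (sqrt (Cm al * X) * p powr (tau / 4) + C6 al / 2)"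
      by (rule mult_mono[OF sY s1]) (use s0 in auto)
    then show ?thesis by simp
  qed
  also have "\<dots> = p powr (1/2) * p powr (tau / 4) * (2 * sqrt (Cm al * X)) + p powr (1/2) * C6 al"
    by (simp add: algebra_simps)
  also have "\<dots> \<le> p powr bet * (Cm al + X) + p powr bet * C6 al"
    unfolding pb2 using amgm[OF Cm_nn X0] pb C6n by (intro add_mono mult_left_mono mult_right_mono) auto
  also have "\<dots> = p powr bet * (C8 al + H t)" unfolding C8_def X_def by (simp add: algebra_simps)
  finally show ?thesis unfolding p_def by simp
qed

end

end

context sol begin

definition "Zf t = (1 + Y t) powr (1 - bet)"
definition "Zd t = (1 - bet) * (1 + Y t) powr (- bet) * Yd t"

lemma dZ: assumes t: "t \<ge> t0" shows "(Zf has_real_derivative Zd t) (at t within {t0..})"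
proof -
  have p: "1 + Y t > 0" using nonnegs[OF t] by simp
  have "((\<lambda>s. (1 + Y s) powr (1 - bet)) has_real_derivative ((1 - bet) * (1 + Y t) powr (1 - bet - 1)) * (0 + Yd t)) (at t within {t0..})"
  proof -
    have d1: "((\<lambda>z. z powr (1 - bet)) has_real_derivative (1 - bet) * (1 + Y t) powr (1 - bet - 1)) (at (1 + Y t))"
      by (rule has_real_derivative_powr[OF p])
    have d2: "((\<lambda>s. 1 + Y s) has_real_derivative 0 + Yd t) (at t within {t0..})"
      by (intro derivative_intros dY[unfolded Yd_def[symmetric]] t)
    show ?thesis using DERIV_chain2[where g="\<lambda>s. 1 + Y s" and x=t, OF d1 d2] by simp
  qed
  then show ?thesis unfolding Zf_def[abs_def] Zd_def by simp
qed

context fixes al assumes al: "al > 0" and d0: "dd t0 \<le> al"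
begin

lemma Zd_bound: assumes t: "t > t0"
  shows "Zd t \<le> (1 - bet) * (- 2 / eps * (Zf t - 1) + C8 al + H t)"
proof -
  have tt: "t \<ge> t0" using t by simp
  define p where "p = 1 + Y t"
  have p1: "p \<ge> 1" unfolding p_def using nonnegs[OF tt] by simp
  have b: "1 - bet > 0" using bet by simp
  have q0: "p powr (- bet) \<ge> 0" by simp
  have q1: "p powr (- bet) \<le> 1"
  proof -
    have "p powr (- bet) \<le> p powr 0" using p1 bet by (intro powr_mono) auto
    then show ?thesis using p1 by simp
  qed
  have "Zd t \<le> (1 - bet) * p powr (- bet) * (- 2 / eps * Y t + p powr bet * (C8 al + H t))"
    unfolding Zd_def p_def using Yd_bound[OF al d0 t] b by (intro mult_left_mono) (auto simp: p_def)
  also have "\<dots> = (1 - bet) * (- 2 / eps * (Y t * p powr (- bet)) + (p powr (- bet) * p powr bet) * (C8 al + H t))"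
    by algebra
  also have "p powr (- bet) * p powr bet = 1" using p1 by (simp add: powr_add[symmetric])
  also have "Y t * p powr (- bet) = p powr (1 - bet) - p powr (- bet)"
  proof -
    have "Y t = p - 1" unfolding p_def by simp
    then have "Y t * p powr (- bet) = p * p powr (- bet) - p powr (- bet)" by (simp only: left_diff_distrib mult_1)
    also have "p * p powr (- bet) = p powr (1 - bet)"
    proof -
      have "p powr (1 + - bet) = p powr 1 * p powr (- bet)" by (rule powr_add)
      then show ?thesis using p1 by simp
    qed
    finally show ?thesis .
  qed
  also have "(1 - bet) * (- 2 / eps * (p powr (1 - bet) - p powr (- bet)) + 1 * (C8 al + H t))
      \<le> (1 - bet) * (- 2 / eps * (Zf t - 1) + C8 al + H t)"
  proof -
    have "- 2 / eps * (p powr (1 - bet) - p powr (- bet)) \<le> - 2 / eps * (Zf t - 1)"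
      unfolding Zf_def p_def[symmetric] using q1 eps_pos by (intro mult_left_mono_neg) auto
    then show ?thesis using b by (intro mult_left_mono) auto
  qed
  finally show ?thesis .
qed

definition "Th t = Zf t + (1 - bet) * E1 t - Bth al"

lemma Th_decay: "t \<ge> t0 \<Longrightarrow> Th t \<le> exp (- (2 * (1 - bet) / eps) * (t - t0)) * Th t0"
proof (rule exp_decay[where g' = "\<lambda>t. Zd t + (1 - bet) * E1d t"])
  show "\<forall>t\<in>{t0..}. (Th has_real_derivative Zd t + (1 - bet) * E1d t) (at t within {t0..})"
    unfolding Th_def[abs_def] using dZ dE1 by (auto intro!: derivative_eq_intros)
  show "\<forall>t>t0. Zd t + (1 - bet) * E1d t \<le> - (2 * (1 - bet) / eps) * Th t"
  proof (intro allI impI)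
    fix t assume t: "t > t0"
    have tt: "t \<ge> t0" using t by simp
    have b: "1 - bet > 0" "1 - bet \<le> 1" using bet by auto
    have "kap * D1 t \<ge> 0" using kap_pos nonnegs(5)[OF tt] by simp
    then have e1: "E1d t \<le> - H t" using E1d_le[OF t] by linarith
    have "(1 - bet) * E1d t \<le> (1 - bet) * (- H t)" using e1 b by (intro mult_left_mono) auto
    moreover have "Zd t \<le> (1 - bet) * (- 2 / eps * (Zf t - 1) + C8 al + H t)" by (rule Zd_bound[OF t])
    moreover have "(1 - bet) * E1 t \<le> e0 al * al\<^sup>2"
    proof -
      have "(1 - bet) * E1 t \<le> 1 * E1 t" using b E1_nn[OF tt] by (intro mult_right_mono) auto
      then show ?thesis using E1_le[OF al d0 tt] by simp
    qed
    ultimately have "Zd t + (1 - bet) * E1d t \<le> (1 - bet) * (- 2 / eps * (Zf t - 1) + C8 al)"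
      by (simp add: algebra_simps)
    also have "\<dots> \<le> - (2 * (1 - bet) / eps) * Th t"
    proof -
      have "(1 - bet) * E1 t * (2 / eps) \<le> e0 al * al\<^sup>2 * (2 / eps)"
        using \<open>(1 - bet) * E1 t \<le> e0 al * al\<^sup>2\<close> eps_pos by (intro mult_right_mono) auto
      have key: "- 2 / eps * (Zf t - 1) + C8 al \<le> - 2 / eps * (Zf t + (1 - bet) * E1 t - Bth al)"
      proof -
        have "- 2 / eps * (Zf t + (1 - bet) * E1 t - Bth al) - (- 2 / eps * (Zf t - 1) + C8 al)
            = e0 al * al\<^sup>2 * (2 / eps) - (1 - bet) * E1 t * (2 / eps)"
          unfolding Bth_def using eps_pos by (simp add: field_simps)
        then show ?thesis using \<open>(1 - bet) * E1 t * (2 / eps) \<le> e0 al * al\<^sup>2 * (2 / eps)\<close> by linarith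
      qed
      then have "(1 - bet) * (- 2 / eps * (Zf t - 1) + C8 al) \<le> (1 - bet) * (- 2 / eps * (Zf t + (1 - bet) * E1 t - Bth al))"
        using b by (intro mult_left_mono) auto
      then show ?thesis unfolding Th_def by (simp add: algebra_simps)
    qed
    finally show "Zd t + (1 - bet) * E1d t \<le> - (2 * (1 - bet) / eps) * Th t" .
  qed
qed

lemma Zf_bound: assumes t: "t \<ge> t0" shows "Zf t \<le> Zb al"
proof -
  have tt: "t0 \<ge> t0" by simp
  have th: "Th t \<le> max 0 (Th t0)"
  proof -
    have "Th t \<le> exp (- (2 * (1 - bet) / eps) * (t - t0)) * Th t0" by (rule Th_decay[OF t])
    also have "\<dots> \<le> max 0 (Th t0)"
    proof (cases "Th t0 \<ge> 0")
      case True
      have "0 \<le> (2 * (1 - bet) / eps) * (t - t0)" using bet eps_pos t by (intro mult_nonneg_nonneg) auto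
      then have "exp (- (2 * (1 - bet) / eps) * (t - t0)) \<le> 1" by simp
      then show ?thesis using True by (simp add: mult_left_le_one_le)
    next
      case False
      have "exp (- (2 * (1 - bet) / eps) * (t - t0)) * Th t0 \<le> 0" by (rule mult_nonneg_nonpos) (use False in auto)
      then show ?thesis by simp
    qed
    finally show ?thesis .
  qed
  have Y0: "Y t0 \<le> 2 * (eps\<^sup>2 + 1) * al\<^sup>2"
  proof -
    have "Y t0 \<le> 2 * eps\<^sup>2 * Wf t0 + 2 * V2 t0" by (rule Y_le[OF tt])
    also have "\<dots> \<le> 2 * (eps\<^sup>2 + 1) * (dd t0)\<^sup>2"
    proof -
      have "0 \<le> 2 * (eps\<^sup>2 + 1) * (nu2 t0 + Qf t0) + 2 * Wf t0 + 2 * eps\<^sup>2 * V2 t0" using nonnegs[OF tt] by simp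
      moreover have "2 * (eps\<^sup>2 + 1) * (dd t0)\<^sup>2 - (2 * eps\<^sup>2 * Wf t0 + 2 * V2 t0) = 2 * (eps\<^sup>2 + 1) * (nu2 t0 + Qf t0) + 2 * Wf t0 + 2 * eps\<^sup>2 * V2 t0"
        unfolding dd_sq[OF tt] by (simp add: algebra_simps)
      ultimately show ?thesis by linarith
    qed
    also have "\<dots> \<le> 2 * (eps\<^sup>2 + 1) * al\<^sup>2" using d0 dd_nn[OF tt]
      by (intro mult_left_mono power_mono) auto
    finally show ?thesis .
  qed
  have Z0: "Zf t0 \<le> 1 + Y t0"
  proof -
    have "(1 + Y t0) powr (1 - bet) \<le> (1 + Y t0) powr 1" using bet nonnegs[OF tt] by (intro powr_mono) auto
    then show ?thesis unfolding Zf_def using nonnegs[OF tt] by simp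
  qed
  have E0: "(1 - bet) * E1 t0 \<le> e0 al * al\<^sup>2"
  proof -
    have "(1 - bet) * E1 t0 \<le> 1 * E1 t0" using bet E1_nn[OF tt] by (intro mult_right_mono) auto
    then show ?thesis using E1_t0[OF al d0] by simp
  qed
  have "Zf t \<le> Zf t + (1 - bet) * E1 t" using bet E1_nn[OF t] by simp
  also have "\<dots> = Th t + Bth al" unfolding Th_def by simp
  also have "\<dots> \<le> max 0 (Th t0) + Bth al" using th by simp
  also have "\<dots> \<le> Zb al" unfolding Zb_def Th_def using Y0 Z0 E0 by auto
  finally show ?thesis .
qed

lemma Y_bound: assumes t: "t \<ge> t0" shows "1 + Y t \<le> Yb1 al"
proof -
  have b: "1 - bet > 0" using bet by simp
  have p: "1 + Y t \<ge> 1" using nonnegs[OF t] by simp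
  have "(1 + Y t) powr (1 - bet) \<le> Zb al" using Zf_bound[OF t] unfolding Zf_def .
  then have "((1 + Y t) powr (1 - bet)) powr (1 / (1 - bet)) \<le> Zb al powr (1 / (1 - bet))"
    using b by (intro powr_mono2) auto
  then show ?thesis unfolding Yb1_def using b p by (simp add: powr_powr)
qed

lemma Mt_bound: assumes t: "t \<ge> t0" shows "Mt t + \<bar>a0\<bar> \<le> Cr al"
proof -
  have "Mt t + \<bar>a0\<bar> \<le> Cm al * (1 + Y t) powr (tau / 2)" by (rule Mt_bound1[OF al d0 t])
  also have "\<dots> \<le> Cm al * Yb1 al powr (tau / 2)"
    using Y_bound[OF t] nonnegs[OF t] tau Cm_nn[OF al d0] by (intro mult_left_mono powr_mono2) auto
  finally show ?thesis unfolding Cr_def .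
qed

end

end

context sol begin

definition "dl al = min (min (kap * pi\<^sup>2 / (4 * (1 + Cr al * \<bar>a0\<bar> / (2 * kk * pi\<^sup>2)))) (kk * pi\<^sup>2 / (2 * Cr al))) (kk / 2)"
definition "gm al = min (min (kap * pi\<^sup>2 / (4 * (3 / eps + 3 * eps * Cr al * \<bar>a0\<bar>))) (1 / (12 * eps * Cr al)))
    (dl al * kk * pi\<^sup>2 / (12 * eps * ((L2 al)\<^sup>2 + 1)))"
definition "cL al = min (min (kap * pi\<^sup>2 / 2) (dl al * kk / 4)) (gm al / eps)"
definition "cU al = 1 + L2 al + eps + gm al"
definition "mL al = min (kk / 4) (gm al)"
definition "ccf al = cL al / cU al"
definition "Dfin al = sqrt ((2 + 2 / eps\<^sup>2) * cU al * (3 + 2 * eps\<^sup>2) / mL al)"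
definition "Cfin al = ccf al / 2"

definition "Vf al t = E1 t + dl al * J t + gm al * Y t"
definition "Vd al t = E1d t + dl al * Jd t + gm al * Yd t"

lemma dV: "t \<ge> t0 \<Longrightarrow> (Vf al has_real_derivative Vd al t) (at t within {t0..})"
  unfolding Vf_def[abs_def] Vd_def using dE1 dJ dY[unfolded Yd_def[symmetric]]
  by (intro DERIV_add DERIV_cmult) auto

context fixes al assumes al: "al > 0" and d0: "dd t0 \<le> al"
begin

lemma Cr_pos: "Cr al > 0"
proof -
  have Cd1: "Cd al \<ge> 1" using Cd_pos B1_ge[OF al d0] by simp
  have "Cm al \<ge> A * Cd al powr (tau / 2)" unfolding Cm_def using A'_nonneg by simp
  moreover have "A * Cd al powr (tau / 2) > 0" using A_pos Cd1 by simp
  ultimately have cm: "Cm al > 0" by simp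
  have c8: "C8 al \<ge> 0"
  proof -
    have "C6 al \<ge> 0" unfolding C6_def using L2_props(2)[OF al d0 order.refl] eps_pos B1_ge[OF al d0] by simp
    then show ?thesis unfolding C8_def using cm B1_ge[OF al d0] by simp
  qed
  have "Bth al \<ge> 1" unfolding Bth_def using e0_ge[OF al d0] c8 eps_pos by simp
  then have "Zb al > 0" unfolding Zb_def by simp
  then have "Yb1 al > 0" unfolding Yb1_def by simp
  then show ?thesis unfolding Cr_def using cm by simp
qed

lemma L2n: "L2 al \<ge> 0" using L2_props(2)[OF al d0 order.refl] .

lemma min3: "min (min x y) z \<le> x" "min (min x y) z \<le> y" "min (min x y) z \<le> z" for x y z :: real
  by auto

lemma div_le_aux: "g \<le> k / (m * p) \<Longrightarrow> p > 0 \<Longrightarrow> m > 0 \<Longrightarrow> g * p \<le> k / m" for g k m p :: real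
proof -
  assume a: "g \<le> k / (m * p)" "p > 0" "m > 0"
  then have "g * (m * p) \<le> k" by (simp add: pos_le_divide_eq)
  then have "(g * p) * m \<le> k" by (simp add: algebra_simps)
  then show ?thesis using a by (simp add: pos_le_divide_eq)
qed

lemma sq1: "0 < x\<^sup>2 + (1::real)"
proof -
  have "0 \<le> x\<^sup>2" by simp
  then show ?thesis by linarith
qed

lemma consts_pos: "dl al > 0" "gm al > 0" "cL al > 0" "cU al > 0" "mL al > 0"
proof -
  have kp: "kk > 0" using kk_pos by simp
  note cr = Cr_pos
  have pa: "1 + Cr al * \<bar>a0\<bar> / (2 * kk * pi\<^sup>2) > 0" using Cr_pos kp by (simp add: add_pos_nonneg)
  have d1: "kap * pi\<^sup>2 / (4 * (1 + Cr al * \<bar>a0\<bar> / (2 * kk * pi\<^sup>2))) > 0" using kap_pos pa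
    by (intro divide_pos_pos mult_pos_pos) auto
  have d2: "kk * pi\<^sup>2 / (2 * Cr al) > 0" using kp cr by simp
  show d: "dl al > 0" unfolding dl_def using d1 d2 kp by simp
  have pb: "3 / eps + 3 * eps * Cr al * \<bar>a0\<bar> > 0" using eps_pos cr by (simp add: add_pos_nonneg)
  have g1: "kap * pi\<^sup>2 / (4 * (3 / eps + 3 * eps * Cr al * \<bar>a0\<bar>)) > 0" using kap_pos pb by simp
  have g2: "1 / (12 * eps * Cr al) > 0" using eps_pos cr by simp
  have pc: "12 * eps * ((L2 al)\<^sup>2 + 1) > 0" using eps_pos sq1 by simp
  have g3: "dl al * kk * pi\<^sup>2 / (12 * eps * ((L2 al)\<^sup>2 + 1)) > 0" using d kp pc by simp
  show g: "gm al > 0" unfolding gm_def using g1 g2 g3 by simp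
  show "cL al > 0" unfolding cL_def using kap_pos kp d g eps_pos by simp
  show "cU al > 0" unfolding cU_def using L2n eps_pos g by simp
  show "mL al > 0" unfolding mL_def using kp g by simp
qed

lemma dl_le: "dl al \<le> kk / 2" "dl al * (1 + Cr al * \<bar>a0\<bar> / (2 * kk * pi\<^sup>2)) \<le> kap * pi\<^sup>2 / 4"
  "dl al * Cr al \<le> kk * pi\<^sup>2 / 2"
proof -
  have kp: "kk > 0" using kk_pos by simp
  show "dl al \<le> kk / 2" unfolding dl_def by (rule min3)
  have p: "1 + Cr al * \<bar>a0\<bar> / (2 * kk * pi\<^sup>2) > 0" using Cr_pos kp by (simp add: add_pos_nonneg)
  have "dl al \<le> kap * pi\<^sup>2 / (4 * (1 + Cr al * \<bar>a0\<bar> / (2 * kk * pi\<^sup>2)))" unfolding dl_def by (rule min3)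
  then show "dl al * (1 + Cr al * \<bar>a0\<bar> / (2 * kk * pi\<^sup>2)) \<le> kap * pi\<^sup>2 / 4"
    using p by (intro div_le_aux) auto
  have "dl al \<le> kk * pi\<^sup>2 / (2 * Cr al)" unfolding dl_def by (rule min3)
  then show "dl al * Cr al \<le> kk * pi\<^sup>2 / 2" using Cr_pos by (intro div_le_aux) auto
qed

lemma gm_le: "gm al * (3 / eps + 3 * eps * Cr al * \<bar>a0\<bar>) \<le> kap * pi\<^sup>2 / 4"
  "gm al * (eps * Cr al) \<le> 1 / 12" "gm al * (eps * ((L2 al)\<^sup>2 + 1)) \<le> dl al * kk * pi\<^sup>2 / 12"
proof -
  have p: "3 / eps + 3 * eps * Cr al * \<bar>a0\<bar> > 0" using eps_pos Cr_pos by (simp add: add_pos_nonneg)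
  have "gm al \<le> kap * pi\<^sup>2 / (4 * (3 / eps + 3 * eps * Cr al * \<bar>a0\<bar>))" unfolding gm_def by (rule min3)
  then show "gm al * (3 / eps + 3 * eps * Cr al * \<bar>a0\<bar>) \<le> kap * pi\<^sup>2 / 4" using p by (intro div_le_aux) auto
  have "gm al \<le> 1 / (12 * (eps * Cr al))" unfolding gm_def using min3(2) by (simp add: mult.assoc)
  then show "gm al * (eps * Cr al) \<le> 1 / 12" using eps_pos Cr_pos by (intro div_le_aux) auto
  have g3: "gm al \<le> dl al * kk * pi\<^sup>2 / (12 * (eps * ((L2 al)\<^sup>2 + 1)))" unfolding gm_def using min3(3) by (simp add: mult.assoc)
  then show "gm al * (eps * ((L2 al)\<^sup>2 + 1)) \<le> dl al * kk * pi\<^sup>2 / 12"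
  proof (rule div_le_aux)
    show "0 < eps * ((L2 al)\<^sup>2 + 1)" using eps_pos sq1 by simp
  qed (use g3 in auto)
qed

end

end

context sol begin

context fixes al assumes al: "al > 0" and d0: "dd t0 \<le> al"
begin

lemma sq_sum3: "(p + q + r)\<^sup>2 \<le> 3 * (p\<^sup>2 + q\<^sup>2 + r\<^sup>2)" for p q r :: real
proof -
  have "0 \<le> (p - q)\<^sup>2 + (q - r)\<^sup>2 + (p - r)\<^sup>2" by simp
  then show ?thesis by (simp add: power2_eq_square algebra_simps)
qed

lemma Vd_bound: assumes t: "t > t0"
  shows "Vd al t \<le> - cL al * (V2 t + Qf t + Y t)"
proof -
  have tt: "t \<ge> t0" using t by simp
  note nn = nonnegs[OF tt]
  define dlv where "dlv = dl al"
  define gmv where "gmv = gm al"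
  define Rr where "Rr = Cr al"
  define L where "L = L2 al"
  have kp: "kk > 0" using kk_pos by simp
  have dp: "dlv > 0" "gmv > 0" using consts_pos[OF al d0] unfolding dlv_def gmv_def by auto
  have Rp: "Rr > 0" unfolding Rr_def by (rule Cr_pos[OF al d0])
  have Lp: "L \<ge> 0" unfolding L_def by (rule L2n[OF al d0])
  have pi2: "pi\<^sup>2 > 0" by simp
  have wu: "pi\<^sup>2 * nu2 t \<le> Qf t" by (rule wirt_u[OF tt])
  have wt: "pi\<^sup>2 * V2 t \<le> D1 t" by (rule wirt_ut[OF tt])
  have nuQ: "nu2 t \<le> Qf t / pi\<^sup>2" using wu pi2 by (simp add: field_simps)
  have R1: "Rn t \<le> Rr * H t + Rr * \<bar>a0\<bar> * V2 t"
  proof -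
    have "Rn t \<le> (Mt t + \<bar>a0\<bar>) * (H t + \<bar>a0\<bar> * V2 t)" by (rule Rn_bound[OF t])
    also have "\<dots> \<le> Rr * (H t + \<bar>a0\<bar> * V2 t)"
      using Mt_bound[OF al d0 tt] H_nn[OF t] nn unfolding Rr_def by (intro mult_right_mono) auto
    finally show ?thesis by (simp add: algebra_simps)
  qed
  have J2: "sqrt (nu2 t) * sqrt (Rn t) \<le> kk * Qf t / 2 + Rn t / (2 * kk * pi\<^sup>2)"
  proof -
    have x0: "kk * pi\<^sup>2 * nu2 t \<ge> 0" using kp nn by simp
    have y0: "Rn t / (kk * pi\<^sup>2) \<ge> 0" using kp nn by simp
    have "2 * sqrt ((kk * pi\<^sup>2 * nu2 t) * (Rn t / (kk * pi\<^sup>2))) \<le> kk * pi\<^sup>2 * nu2 t + Rn t / (kk * pi\<^sup>2)"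
      by (rule amgm[OF al d0 x0 y0])
    moreover have "(kk * pi\<^sup>2 * nu2 t) * (Rn t / (kk * pi\<^sup>2)) = nu2 t * Rn t" using kp by (simp add: field_simps)
    moreover have "kk * pi\<^sup>2 * nu2 t \<le> kk * Qf t" using wu kp by (simp add: mult.assoc mult_left_mono)
    ultimately have "2 * (sqrt (nu2 t) * sqrt (Rn t)) \<le> kk * Qf t + Rn t / (kk * pi\<^sup>2)"
      by (simp add: real_sqrt_mult)
    then show ?thesis by (simp add: field_simps)
  qed
  have a2: "dlv * Jd t \<le> dlv * V2 t - dlv * kk * Qf t / 2 + dlv / (2 * kk * pi\<^sup>2) * Rn t"
  proof -
    have "Jd t \<le> V2 t - kk * Qf t / 2 + Rn t / (2 * kk * pi\<^sup>2)" using Jd_le[OF tt] J2 by simp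
    then have "dlv * Jd t \<le> dlv * (V2 t - kk * Qf t / 2 + Rn t / (2 * kk * pi\<^sup>2))" using dp by (intro mult_left_mono) auto
    then show ?thesis by (simp add: algebra_simps)
  qed
  define S where "S = sqrt (Rn t) + L * sqrt (nu2 t) + sqrt (V2 t) / eps"
  have S0: "S \<ge> 0" unfolding S_def using Lp eps_pos nn by simp
  have Y1: "Yd t \<le> - 2 / eps * Y t + 2 * sqrt (Y t) * S"
    unfolding S_def L_def by (rule Yd_le[OF tt F_le[OF al d0 tt] L2n[OF al d0]])
  have Y2: "2 * sqrt (Y t) * S \<le> Y t / eps + eps * S\<^sup>2"
  proof -
    have x0: "Y t / eps \<ge> 0" using nn eps_pos by simp
    have y0: "eps * S\<^sup>2 \<ge> 0" using eps_pos by simp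
    have "2 * sqrt ((Y t / eps) * (eps * S\<^sup>2)) \<le> Y t / eps + eps * S\<^sup>2" by (rule amgm[OF al d0 x0 y0])
    moreover have "(Y t / eps) * (eps * S\<^sup>2) = Y t * S\<^sup>2" using eps_pos by simp
    ultimately show ?thesis using S0 by (simp add: real_sqrt_mult)
  qed
  have Y3: "S\<^sup>2 \<le> 3 * (Rn t + L\<^sup>2 * nu2 t + V2 t / eps\<^sup>2)"
  proof -
    have "S\<^sup>2 \<le> 3 * ((sqrt (Rn t))\<^sup>2 + (L * sqrt (nu2 t))\<^sup>2 + (sqrt (V2 t) / eps)\<^sup>2)"
      unfolding S_def by (rule sq_sum3)
    then show ?thesis using nn by (simp add: power_mult_distrib power_divide)
  qed
  have a3: "gmv * Yd t \<le> - gmv / eps * Y t + 3 * gmv * eps * Rn t + 3 * gmv * eps * L\<^sup>2 / pi\<^sup>2 * Qf t + 3 * gmv / eps * V2 t"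
  proof -
    have e1: "eps * S\<^sup>2 \<le> eps * (3 * (Rn t + L\<^sup>2 * nu2 t + V2 t / eps\<^sup>2))" using Y3 eps_pos by (intro mult_left_mono) auto
    have e2: "eps * (3 * (Rn t + L\<^sup>2 * nu2 t + V2 t / eps\<^sup>2)) = 3 * eps * Rn t + 3 * eps * (L\<^sup>2 * nu2 t) + 3 / eps * V2 t"
      using eps_pos by (simp add: field_simps power2_eq_square)
    have e3: "3 * eps * (L\<^sup>2 * nu2 t) \<le> 3 * eps * (L\<^sup>2 * (Qf t / pi\<^sup>2))"
      using nuQ eps_pos by (intro mult_left_mono) auto
    have e4: "3 * eps * (L\<^sup>2 * (Qf t / pi\<^sup>2)) = 3 * eps * L\<^sup>2 / pi\<^sup>2 * Qf t" by simp
    have e5: "- 2 / eps * Y t + Y t / eps = - Y t / eps" by (simp add: field_simps)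
    have "Yd t \<le> - Y t / eps + 3 * eps * Rn t + 3 * eps * L\<^sup>2 / pi\<^sup>2 * Qf t + 3 / eps * V2 t"
      using Y1 Y2 e1 e2 e3 e4 e5 by linarith
    then have "gmv * Yd t \<le> gmv * (- Y t / eps + 3 * eps * Rn t + 3 * eps * L\<^sup>2 / pi\<^sup>2 * Qf t + 3 / eps * V2 t)"
      using dp by (intro mult_left_mono) auto
    then show ?thesis by (simp add: algebra_simps)
  qed
  have a1: "E1d t \<le> - kap * D1 t - H t" by (rule E1d_le[OF t])
  define cR where "cR = dlv / (2 * kk * pi\<^sup>2) + 3 * gmv * eps"
  have cR0: "cR \<ge> 0" unfolding cR_def using dp kp eps_pos by simp
  have cRR: "cR * Rr \<le> 1 / 2"
  proof -
    have "dlv * Rr \<le> kk * pi\<^sup>2 / 2" unfolding dlv_def Rr_def by (rule dl_le(3)[OF al d0])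
    then have b1: "dlv / (2 * kk * pi\<^sup>2) * Rr \<le> 1 / 4" using kp by (simp add: field_simps)
    have "gmv * (eps * Rr) \<le> 1 / 12" unfolding gmv_def Rr_def by (rule gm_le(2)[OF al d0])
    then have b2: "3 * gmv * eps * Rr \<le> 1 / 4" by (simp add: algebra_simps)
    have "cR * Rr = dlv / (2 * kk * pi\<^sup>2) * Rr + 3 * gmv * eps * Rr" unfolding cR_def by (simp add: algebra_simps)
    then show ?thesis using b1 b2 by linarith
  qed
  have a4: "cR * Rn t \<le> H t / 2 + cR * Rr * \<bar>a0\<bar> * V2 t"
  proof -
    have "cR * Rn t \<le> cR * (Rr * H t + Rr * \<bar>a0\<bar> * V2 t)" using R1 cR0 by (intro mult_left_mono) auto
    moreover have "cR * (Rr * H t + Rr * \<bar>a0\<bar> * V2 t) = (cR * Rr) * H t + cR * Rr * \<bar>a0\<bar> * V2 t" by (simp add: algebra_simps)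
    moreover have "(cR * Rr) * H t \<le> (1/2) * H t" using cRR H_nn[OF t] by (intro mult_right_mono) auto
    ultimately show ?thesis by simp
  qed
  have a5: "dlv * V2 t + 3 * gmv / eps * V2 t + cR * Rr * \<bar>a0\<bar> * V2 t \<le> kap * pi\<^sup>2 / 2 * V2 t"
  proof -
    have "dlv * (1 + Rr * \<bar>a0\<bar> / (2 * kk * pi\<^sup>2)) \<le> kap * pi\<^sup>2 / 4" unfolding dlv_def Rr_def by (rule dl_le(2)[OF al d0])
    moreover have "gmv * (3 / eps + 3 * eps * Rr * \<bar>a0\<bar>) \<le> kap * pi\<^sup>2 / 4" unfolding gmv_def Rr_def by (rule gm_le(1)[OF al d0])
    moreover have "dlv + 3 * gmv / eps + cR * Rr * \<bar>a0\<bar> = dlv * (1 + Rr * \<bar>a0\<bar> / (2 * kk * pi\<^sup>2)) + gmv * (3 / eps + 3 * eps * Rr * \<bar>a0\<bar>)"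
      unfolding cR_def by (simp add: algebra_simps)
    ultimately have "dlv + 3 * gmv / eps + cR * Rr * \<bar>a0\<bar> \<le> kap * pi\<^sup>2 / 2" by simp
    then have "(dlv + 3 * gmv / eps + cR * Rr * \<bar>a0\<bar>) * V2 t \<le> kap * pi\<^sup>2 / 2 * V2 t" using nn by (intro mult_right_mono) auto
    then show ?thesis by (simp add: algebra_simps)
  qed
  have a6: "3 * gmv * eps * L\<^sup>2 / pi\<^sup>2 * Qf t \<le> dlv * kk * Qf t / 4"
  proof -
    have "gmv * (eps * (L\<^sup>2 + 1)) \<le> dlv * kk * pi\<^sup>2 / 12" unfolding gmv_def dlv_def L_def by (rule gm_le(3)[OF al d0])
    moreover have "gmv * (eps * L\<^sup>2) \<le> gmv * (eps * (L\<^sup>2 + 1))" using dp eps_pos by (intro mult_left_mono) auto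
    ultimately have "gmv * (eps * L\<^sup>2) \<le> dlv * kk * pi\<^sup>2 / 12" by linarith
    then have "3 * gmv * eps * L\<^sup>2 / pi\<^sup>2 \<le> dlv * kk / 4" by (simp add: field_simps)
    then have "3 * gmv * eps * L\<^sup>2 / pi\<^sup>2 * Qf t \<le> dlv * kk / 4 * Qf t" using nn by (intro mult_right_mono) auto
    then show ?thesis by simp
  qed
  have a7: "kap * pi\<^sup>2 / 2 * V2 t \<le> kap * D1 t / 2"
  proof -
    have "kap * (pi\<^sup>2 * V2 t) \<le> kap * D1 t" using wt kap_pos by (intro mult_left_mono) auto
    then show ?thesis by simp
  qed
  have a8: "cR * Rn t = dlv / (2 * kk * pi\<^sup>2) * Rn t + 3 * gmv * eps * Rn t" unfolding cR_def by (simp add: algebra_simps)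
  have vd: "Vd al t = E1d t + dlv * Jd t + gmv * Yd t" unfolding Vd_def dlv_def gmv_def ..
  have main: "Vd al t \<le> - (kap * pi\<^sup>2 / 2 * V2 t) - dlv * kk * Qf t / 4 - gmv / eps * Y t"
    using vd a1 a2 a3 a4 a5 a6 a7 a8 H_nn[OF t] by linarith
  have cl: "cL al \<le> kap * pi\<^sup>2 / 2" "cL al \<le> dlv * kk / 4" "cL al \<le> gmv / eps"
    unfolding cL_def dlv_def gmv_def by (rule min3[OF al d0])+
  have c1: "cL al * V2 t \<le> kap * pi\<^sup>2 / 2 * V2 t" using cl nn by (intro mult_right_mono) auto
  have c2: "cL al * Qf t \<le> dlv * kk * Qf t / 4"
  proof -
    have "cL al * Qf t \<le> dlv * kk / 4 * Qf t" using cl nn by (intro mult_right_mono) auto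
    then show ?thesis by simp
  qed
  have c3: "cL al * Y t \<le> gmv / eps * Y t" using cl nn by (intro mult_right_mono) auto
  have "- cL al * (V2 t + Qf t + Y t) = - (cL al * V2 t) - cL al * Qf t - cL al * Y t" by (simp add: algebra_simps)
  then show ?thesis using main c1 c2 c3 by linarith
qed

end

end

context sol begin

lemma nu2_le_Qf: "t \<ge> t0 \<Longrightarrow> nu2 t \<le> Qf t"
proof -
  assume t: "t \<ge> t0"
  have "(1::real) \<le> pi\<^sup>2" using pi_gt3 by (intro one_le_power) simp
  then have "1 * nu2 t \<le> pi\<^sup>2 * nu2 t" using nonnegs[OF t] by (intro mult_right_mono) auto
  then show ?thesis using wirt_u[OF t] by simp
qed

lemma UU_le: "t \<ge> t0 \<Longrightarrow> \<bar>UU t\<bar> \<le> (Qf t + V2 t) / 2"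
proof -
  assume t: "t \<ge> t0"
  have "2 * sqrt (nu2 t * V2 t) \<le> nu2 t + V2 t"
  proof -
    have "0 \<le> (sqrt (nu2 t) - sqrt (V2 t))\<^sup>2" by simp
    then show ?thesis using nonnegs[OF t] by (simp add: power2_eq_square algebra_simps real_sqrt_mult)
  qed
  then have "sqrt (nu2 t) * sqrt (V2 t) \<le> (nu2 t + V2 t) / 2" by (simp add: real_sqrt_mult)
  moreover have "(nu2 t + V2 t) / 2 \<le> (Qf t + V2 t) / 2" using nu2_le_Qf[OF t] by simp
  ultimately show ?thesis using UU_bound[OF t] by linarith
qed

context fixes al assumes al: "al > 0" and d0: "dd t0 \<le> al"
begin

lemma VL: assumes t: "t \<ge> t0" shows "mL al * (V2 t + Qf t + Y t) \<le> Vf al t"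
proof -
  note nn = nonnegs[OF t]
  have kp: "kk > 0" "kk \<le> 1" using kk_pos kk_le by auto
  have dp: "dl al > 0" "gm al > 0" using consts_pos[OF al d0] by auto
  have dk: "dl al \<le> kk / 2" by (rule dl_le(1)[OF al d0])
  have e: "E1 t \<ge> V2 t / 2 + kk / 2 * Qf t" by (rule E1_lower[OF t])
  have j1: "dl al * J t = dl al * UU t + dl al * (eps / 2) * Qf t" unfolding J_def using Qm_eq[OF t] by (simp add: algebra_simps)
  have j2: "dl al * (eps / 2) * Qf t \<ge> 0" using dp eps_pos nn by simp
  have j3: "dl al * UU t \<ge> - (kk / 4) * (Qf t + V2 t)"
  proof -
    have "dl al * \<bar>UU t\<bar> \<le> (kk / 2) * ((Qf t + V2 t) / 2)" using UU_le[OF t] dk dp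
      by (intro mult_mono) auto
    moreover have "dl al * (- \<bar>UU t\<bar>) \<le> dl al * UU t" using dp by (intro mult_left_mono) auto
    ultimately show ?thesis by simp
  qed
  have k1: "kk / 4 * V2 t \<le> 1 / 4 * V2 t" using kp nn by (intro mult_right_mono) auto
  have m: "mL al \<le> kk / 4" "mL al \<le> gm al" unfolding mL_def by auto
  have m1: "mL al * V2 t \<le> 1 / 4 * V2 t" using m kp nn by (intro mult_right_mono) auto
  have m2: "mL al * Qf t \<le> kk / 4 * Qf t" using m nn by (intro mult_right_mono) auto
  have m3: "mL al * Y t \<le> gm al * Y t" using m nn by (intro mult_right_mono) auto
  have vf: "Vf al t = E1 t + dl al * J t + gm al * Y t" unfolding Vf_def ..
  have "mL al * (V2 t + Qf t + Y t) = mL al * V2 t + mL al * Qf t + mL al * Y t" by (simp add: algebra_simps)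
  moreover have "- (kk / 4) * (Qf t + V2 t) = - (kk / 4 * Qf t) - kk / 4 * V2 t" by (simp add: algebra_simps)
  moreover have "kk / 2 * Qf t = 2 * (kk / 4 * Qf t)" by simp
  ultimately show ?thesis using vf e j1 j2 j3 k1 m1 m2 m3 by linarith
qed

lemma VU: assumes t: "t \<ge> t0" shows "Vf al t \<le> cU al * (V2 t + Qf t + Y t)"
proof -
  note nn = nonnegs[OF t]
  have kp: "kk > 0" "kk \<le> 1" using kk_pos kk_le by auto
  have dp: "dl al > 0" "gm al > 0" using consts_pos[OF al d0] by auto
  have dk: "dl al \<le> 1 / 2" using dl_le(1)[OF al d0] kp by simp
  have Lp: "L2 al \<ge> 0" by (rule L2n[OF al d0])
  have e: "E1 t \<le> V2 t / 2 + Qf t / 2 + L2 al / 2 * nu2 t" by (rule E1_upper[OF t G_ge[OF al d0 t]])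
  have e2: "L2 al / 2 * nu2 t \<le> L2 al / 2 * Qf t" using nu2_le_Qf[OF t] Lp by (intro mult_left_mono) auto
  have j: "dl al * J t \<le> (Qf t + V2 t) / 4 + eps / 4 * Qf t"
  proof -
    have "J t \<le> \<bar>UU t\<bar> + eps / 2 * Qf t" unfolding J_def using Qm_eq[OF t] by simp
    also have "\<dots> \<le> (Qf t + V2 t) / 2 + eps / 2 * Qf t" using UU_le[OF t] by simp
    finally have jj: "J t \<le> (Qf t + V2 t) / 2 + eps / 2 * Qf t" .
    have p: "(Qf t + V2 t) / 2 + eps / 2 * Qf t \<ge> 0" using nn eps_pos by simp
    have "dl al * J t \<le> dl al * ((Qf t + V2 t) / 2 + eps / 2 * Qf t)" using jj dp by (intro mult_left_mono) auto
    also have "\<dots> \<le> 1 / 2 * ((Qf t + V2 t) / 2 + eps / 2 * Qf t)" using dk p by (intro mult_right_mono) auto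
    also have "\<dots> = (Qf t + V2 t) / 4 + eps / 4 * Qf t" by (simp add: field_simps)
    finally show ?thesis .
  qed
  have vf: "Vf al t = E1 t + dl al * J t + gm al * Y t" unfolding Vf_def ..
  have "cU al * (V2 t + Qf t + Y t) = V2 t + Qf t + L2 al * Qf t + eps * Qf t + gm al * Qf t
      + (L2 al + eps + gm al) * V2 t + (1 + L2 al + eps) * Y t + gm al * Y t"
    unfolding cU_def by (simp add: algebra_simps)
  moreover have "0 \<le> gm al * Qf t" "0 \<le> (L2 al + eps + gm al) * V2 t" "0 \<le> (1 + L2 al + eps) * Y t"
    using dp nn Lp eps_pos by auto
  moreover have "0 \<le> eps * Qf t" "0 \<le> L2 al * Qf t" using nn eps_pos Lp by auto
  moreover have "L2 al / 2 * Qf t = (L2 al * Qf t) / 2" "eps / 4 * Qf t = (eps * Qf t) / 4" by simp_all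
  moreover have "V2 t / 2 + Qf t / 2 + L2 al / 2 * Qf t + ((Qf t + V2 t) / 4 + eps / 4 * Qf t) + gm al * Y t
      = 3 / 4 * V2 t + 3 / 4 * Qf t + L2 al * Qf t / 2 + eps * Qf t / 4 + gm al * Y t" by (simp add: field_simps)
  moreover have "Vf al t \<le> V2 t / 2 + Qf t / 2 + L2 al / 2 * Qf t + ((Qf t + V2 t) / 4 + eps / 4 * Qf t) + gm al * Y t"
    using vf e e2 j by linarith
  ultimately show ?thesis using nn by linarith
qed

lemma V_decay: assumes t: "t \<ge> t0" shows "Vf al t \<le> exp (- ccf al * (t - t0)) * Vf al t0"
proof (rule exp_decay[where g' = "Vd al"])
  show "\<forall>t\<in>{t0..}. (Vf al has_real_derivative Vd al t) (at t within {t0..})" using dV by auto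
  show "\<forall>t>t0. Vd al t \<le> - ccf al * Vf al t"
  proof (intro allI impI)
    fix s assume s: "s > t0"
    have ss: "s \<ge> t0" using s by simp
    have cp: "cL al > 0" "cU al > 0" using consts_pos[OF al d0] by auto
    have "ccf al * Vf al s \<le> ccf al * (cU al * (V2 s + Qf s + Y s))"
      using VU[OF ss] cp unfolding ccf_def by (intro mult_left_mono) auto
    also have "\<dots> = cL al * (V2 s + Qf s + Y s)" unfolding ccf_def using cp by simp
    finally show "Vd al s \<le> - ccf al * Vf al s" using Vd_bound[OF al d0 s] by simp
  qed
qed (rule t)

lemma consts_final: "Dfin al > 0" "Cfin al > 0"
proof -
  have cp: "cL al > 0" "cU al > 0" "mL al > 0" using consts_pos[OF al d0] by auto
  show "Dfin al > 0" unfolding Dfin_def using cp eps_pos by (simp add: add_pos_nonneg)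
  show "Cfin al > 0" unfolding Cfin_def ccf_def using cp by simp
qed

lemma final_decay: assumes t: "t \<ge> t0" shows "dd t \<le> Dfin al * exp (- Cfin al * (t - t0)) * dd t0"
proof -
  have tt: "t0 \<ge> t0" by simp
  note nn = nonnegs[OF t] and nn0 = nonnegs[OF tt]
  have cp: "cL al > 0" "cU al > 0" "mL al > 0" using consts_pos[OF al d0] by auto
  define S where "S s = V2 s + Qf s + Y s" for s
  have d1: "(dd t)\<^sup>2 \<le> (2 + 2 / eps\<^sup>2) * S t"
  proof -
    have "(dd t)\<^sup>2 = nu2 t + Qf t + Wf t + V2 t" by (rule dd_sq[OF t])
    moreover have "Wf t \<le> 2 * (Y t + V2 t) / eps\<^sup>2" by (rule Wf_le[OF t])
    moreover have "nu2 t \<le> Qf t" by (rule nu2_le_Qf[OF t])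
    moreover have "(2 + 2 / eps\<^sup>2) * S t = 2 * Qf t + 2 * Y t + V2 t + (V2 t + 2 * (Y t + V2 t) / eps\<^sup>2) + 2 / eps\<^sup>2 * Qf t"
      unfolding S_def by (simp add: algebra_simps add_divide_distrib)
    moreover have "0 \<le> 2 / eps\<^sup>2 * Qf t" using nn by simp
    ultimately show ?thesis using nn by linarith
  qed
  have d2: "S t \<le> Vf al t / mL al" using VL[OF t] cp unfolding S_def by (simp add: field_simps)
  have d3: "Vf al t0 \<le> cU al * ((3 + 2 * eps\<^sup>2) * (dd t0)\<^sup>2)"
  proof -
    have "S t0 \<le> (3 + 2 * eps\<^sup>2) * (dd t0)\<^sup>2"
    proof -
      have "Y t0 \<le> 2 * eps\<^sup>2 * Wf t0 + 2 * V2 t0" by (rule Y_le[OF tt])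
      moreover have "(3 + 2 * eps\<^sup>2) * (dd t0)\<^sup>2 = 3 * nu2 t0 + 3 * Qf t0 + 3 * Wf t0 + 3 * V2 t0
          + 2 * eps\<^sup>2 * nu2 t0 + 2 * eps\<^sup>2 * Qf t0 + 2 * eps\<^sup>2 * Wf t0 + 2 * eps\<^sup>2 * V2 t0"
        unfolding dd_sq[OF tt] by (simp add: algebra_simps)
      moreover have "0 \<le> 2 * eps\<^sup>2 * nu2 t0" "0 \<le> 2 * eps\<^sup>2 * Qf t0" "0 \<le> 2 * eps\<^sup>2 * V2 t0" using nn0 by auto
      ultimately show ?thesis unfolding S_def using nn0 by linarith
    qed
    then have "cU al * S t0 \<le> cU al * ((3 + 2 * eps\<^sup>2) * (dd t0)\<^sup>2)" using cp by (intro mult_left_mono) auto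
    then show ?thesis using VU[OF tt] unfolding S_def by simp
  qed
  define E where "E = exp (- Cfin al * (t - t0))"
  have E2: "E\<^sup>2 = exp (- ccf al * (t - t0))" unfolding E_def Cfin_def
    by (simp add: power2_eq_square exp_add[symmetric] algebra_simps)
  have Dsq: "(Dfin al)\<^sup>2 = (2 + 2 / eps\<^sup>2) * cU al * (3 + 2 * eps\<^sup>2) / mL al"
    unfolding Dfin_def using cp eps_pos by (simp add: add_pos_nonneg)
  have "(dd t)\<^sup>2 \<le> (2 + 2 / eps\<^sup>2) * (Vf al t / mL al)"
    using d1 d2 eps_pos by (smt (verit) mult_left_mono zero_le_divide_iff zero_le_power2)
  also have "\<dots> \<le> (2 + 2 / eps\<^sup>2) * ((E\<^sup>2 * (cU al * ((3 + 2 * eps\<^sup>2) * (dd t0)\<^sup>2))) / mL al)"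
  proof -
    have "Vf al t \<le> E\<^sup>2 * Vf al t0" unfolding E2 by (rule V_decay[OF t])
    also have "\<dots> \<le> E\<^sup>2 * (cU al * ((3 + 2 * eps\<^sup>2) * (dd t0)\<^sup>2))" using d3 by (intro mult_left_mono) auto
    finally have "Vf al t / mL al \<le> (E\<^sup>2 * (cU al * ((3 + 2 * eps\<^sup>2) * (dd t0)\<^sup>2))) / mL al"
      using cp by (intro divide_right_mono) auto
    then show ?thesis by (intro mult_left_mono) auto
  qed
  also have "\<dots> = ((2 + 2 / eps\<^sup>2) * cU al * (3 + 2 * eps\<^sup>2) / mL al) * E\<^sup>2 * (dd t0)\<^sup>2"
    by (simp only: divide_inverse) algebra
  also have "\<dots> = (Dfin al * E * dd t0)\<^sup>2" unfolding Dsq[symmetric] by (simp add: power_mult_distrib)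
  finally have "(dd t)\<^sup>2 \<le> (Dfin al * E * dd t0)\<^sup>2" .
  then have "dd t \<le> Dfin al * E * dd t0"
    by (rule power2_le_imp_le) (use dd_nn[OF tt] consts_final(1) in \<open>simp add: E_def\<close>)
  then show ?thesis unfolding E_def .
qed

end

end

theorem theorem2:
  fixes eps K A A' tau :: real
    and F F' :: "real \<Rightarrow> real"
    and a :: "real \<Rightarrow> real \<Rightarrow> real \<Rightarrow> real \<Rightarrow> real \<Rightarrow> real \<Rightarrow> real"
  assumes eps_pos: "eps > 0"
    and F_deriv: "\<forall>s. (F has_real_derivative F' s) (at s)"
    and F'_cont: "continuous_on UNIV F'"
    and a_cont: "continuous_on ({0<..<1} \<times> {0..} \<times> UNIV \<times> UNIV \<times> UNIV \<times> UNIV)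
                   (\<lambda>(x, t, p, q, r, s). a x t p q r s)"
    and F0: "F 0 = 0"
    and K_pos: "K > 0" and F'_le: "\<forall>s. F' s \<le> K" and K_less: "K < 3 * pi\<^sup>2 / 4"
    and a_bdd_below: "bdd_below ((\<lambda>(x, t, p, q, r, s). a x t p q r s) `
                   ({0<..<1} \<times> {0..} \<times> UNIV \<times> UNIV \<times> UNIV \<times> UNIV))"
    and nu_pos: "eps * pi\<^sup>2 + Inf ((\<lambda>(x, t, p, q, r, s). a x t p q r s) `
                   ({0<..<1} \<times> {0..} \<times> UNIV \<times> UNIV \<times> UNIV \<times> UNIV)) > 0"
    and tau: "0 \<le> tau" "tau < 2"
    and A_pos: "A > 0" and A'_nonneg: "A' \<ge> 0"
    and a_growth: "\<forall>phi phix phixx psi. in_Gamma phi phix phixx psi \<longrightarrow>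
                     (\<forall>x\<in>{0<..<1}. \<forall>t\<ge>0.
                        a x t (phi x) (phix x) (phixx x) (psi x)
                          \<le> A * rpow (dG phi phix phixx psi) tau + A')"
  shows "exp_stable_large eps F a"
proof -
  have Fc: "continuous_on UNIV F"
    using F_deriv by (meson DERIV_continuous continuous_at_imp_continuous_on)
  obtain G where G0: "G 0 = 0" and Gd: "\<forall>s. (G has_real_derivative F s) (at s)"
    using antideriv[OF Fc] by blast
  have main: "sol.Dfin eps K A A' tau F' a al > 0 \<and> sol.Cfin eps K A A' tau F' a al > 0 \<and>
      (\<forall>t\<ge>t0. dG (\<lambda>x. u x t) (\<lambda>x. ux x t) (\<lambda>x. uxx x t) (\<lambda>x. ut x t)
         \<le> sol.Dfin eps K A A' tau F' a al * exp (- sol.Cfin eps K A A' tau F' a al * (t - t0))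
           * dG (\<lambda>x. u x t0) (\<lambda>x. ux x t0) (\<lambda>x. uxx x t0) (\<lambda>x. ut x t0))"
    if t0: "t0 \<ge> 0" and s: "is_solution eps F a t0 u ux uxx ut" and al: "al > 0"
      and d0: "dG (\<lambda>x. u x t0) (\<lambda>x. ux x t0) (\<lambda>x. uxx x t0) (\<lambda>x. ut x t0) \<le> al"
    for t0 u ux uxx ut al
  proof -
    obtain utt uxxt where
      c: "\<forall>f \<in> {u, ux, uxx, ut, utt, uxxt}. continuous_on ({0..1} \<times> {t0..}) (\<lambda>(x, t). f x t)"
      and d: "\<forall>x\<in>{0..1}. \<forall>t\<in>{t0..}.
            ((\<lambda>y. u y t) has_real_derivative ux x t) (at x within {0..1})
          \<and> ((\<lambda>y. ux y t) has_real_derivative uxx x t) (at x within {0..1})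
          \<and> ((\<lambda>s. u x s) has_real_derivative ut x t) (at t within {t0..})
          \<and> ((\<lambda>s. ut x s) has_real_derivative utt x t) (at t within {t0..})
          \<and> ((\<lambda>s. uxx x s) has_real_derivative uxxt x t) (at t within {t0..})"
      and b: "\<forall>t\<in>{t0..}. u 0 t = 0 \<and> u 1 t = 0"
      and p: "\<forall>x\<in>{0<..<1}. \<forall>t\<in>{t0<..}.
            - eps * uxxt x t + utt x t - uxx x t
              = F (u x t) - a x t (u x t) (ux x t) (uxx x t) (ut x t) * ut x t"
      using s unfolding is_solution_def by blast
    have S: "sol eps K A A' tau F F' G a t0 u ux uxx ut utt uxxt"
      by (unfold_locales) (use assms G0 Gd t0 c d b p in auto)
    have d0': "sol.dd u ux uxx ut t0 \<le> al" using d0 sol.dd_def[OF S] by simp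
    show ?thesis
      using sol.consts_final[OF S al d0'] sol.final_decay[OF S al d0'] sol.dd_def[OF S] by auto
  qed
  show ?thesis
    unfolding exp_stable_large_def
  proof (intro allI impI)
    fix al :: real assume al: "al > 0"
    show "\<exists>D C. D > 0 \<and> C > 0 \<and>
        (\<forall>t0\<ge>0. \<forall>u ux uxx ut.
           is_solution eps F a t0 u ux uxx ut
           \<and> dG (\<lambda>x. u x t0) (\<lambda>x. ux x t0) (\<lambda>x. uxx x t0) (\<lambda>x. ut x t0) \<le> al
           \<longrightarrow> (\<forall>t\<ge>t0. dG (\<lambda>x. u x t) (\<lambda>x. ux x t) (\<lambda>x. uxx x t) (\<lambda>x. ut x t)
                  \<le> D * exp (- C * (t - t0))
                       * dG (\<lambda>x. u x t0) (\<lambda>x. ux x t0) (\<lambda>x. uxx x t0) (\<lambda>x. ut x t0)))"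
    proof (cases "\<exists>t0 u ux uxx ut. t0 \<ge> 0 \<and> is_solution eps F a t0 u ux uxx ut
           \<and> dG (\<lambda>x. u x t0) (\<lambda>x. ux x t0) (\<lambda>x. uxx x t0) (\<lambda>x. ut x t0) \<le> al")
      case True
      then obtain t0 u ux uxx ut where w: "t0 \<ge> 0" "is_solution eps F a t0 u ux uxx ut"
          "dG (\<lambda>x. u x t0) (\<lambda>x. ux x t0) (\<lambda>x. uxx x t0) (\<lambda>x. ut x t0) \<le> al" by blast
      have pos: "sol.Dfin eps K A A' tau F' a al > 0" "sol.Cfin eps K A A' tau F' a al > 0"
        using main[OF w(1,2) al w(3)] by auto
      show ?thesis
        by (rule exI[of _ "sol.Dfin eps K A A' tau F' a al"], rule exI[of _ "sol.Cfin eps K A A' tau F' a al"])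
          (use pos main al in blast)
    next
      case False
      show ?thesis by (rule exI[of _ 1], rule exI[of _ 1]) (use False in auto)
    qed
  qed
qed

end
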